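(* Let $\alpha$ be a composition and let $\lambda$ be the partition obtained by sorting the parts of $\alpha$ into weakly decreasing order. Then every connected component of $\Gamma(\mathsf{plac})$ consisting of words whose Schensted tableaux have shape $\lambda$ contains a connected component of $\Gamma(\mathsf{hypo})$ consisting of words whose quasi-ribbon tableaux have shape $\alpha$.
   Context: Words are over the positive integers. Kashiwara operators $\tilde f_i$ ($i\ge1$) on a word $u$: replace each $i$ by $+$, each $i+1$ by $-$, delete other letters, then repeatedly delete factors $-+$ until the word has the form $+^{a}-^{b}$; if $a=0$, $\tilde f_i(u)$ is undefined, otherwise $\tilde f_i(u)$ changes the letter $i$ corresponding to the rightmost remaining $+$ into $i+1$. $\Gamma(\mathsf{plac})$ is the directed graph on all words with edges $u\to\tilde f_i(u)$ labelled $i$. Quasi-Kashiwara operator $f_i$: undefined if $u$ contains a (not necessarily consecutive) subsequence $(i+1)\,i$ or no letter $i$; otherwise replaces the rightmost $i$ by $i+1$. $\Gamma(\mathsf{hypo})$ is the directed graph on all words with edges $u\to f_i(u)$ labelled $i$; it is a subgraph of $\Gamma(\mathsf{plac})$. The Schensted tableau $P(u)$ of a word $u$ is the Young tableau produced by Schensted row insertion. A quasi-ribbon tableau of shape $\sigma=(\sigma_1,\dots,\sigma_r)$ is a filling with positive integers of the diagram having $\sigma_i$ cells in row $i$, leftmost cell of row $i+1$ directly below the rightmost cell of row $i$, weakly increasing along rows and strictly increasing down columns. The quasi-ribbon tableau of a word $u$ whose distinct letters are $a_1<\dots<a_k$ is the unique quasi-ribbon tableau containing $|u|_{a_j}$ copies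 of each $a_j$, in which $a_j$ and $a_{j+1}$ lie in different rows iff $u$ contains a subsequence $a_{j+1}a_j$. *)

theory Defs
  imports Main
begin

definition word :: "nat list \<Rightarrow> bool" where
  "word u \<longleftrightarrow> (\<forall>x\<in>set u. 0 < x)"

definition composition :: "nat list \<Rightarrow> bool" where
  "composition \<alpha> \<longleftrightarrow> (\<forall>x\<in>set \<alpha>. 0 < x)"

definition sort_partition :: "nat list \<Rightarrow> nat list" where
  "sort_partition \<alpha> = rev (sort \<alpha>)"

definition has_subseq2 :: "nat list \<Rightarrow> nat \<Rightarrow> nat \<Rightarrow> bool" where
  "has_subseq2 u b a \<longleftrightarrow> (\<exists>p q. p < q \<and> q < length u \<and> u ! p = b \<and> u ! q = a)"

text \<open>Signed subword for index i: letter i becomes + (True), letter i+1 becomes - (False);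
  each sign remembers its position in u.\<close>
definition signs :: "nat \<Rightarrow> nat list \<Rightarrow> (bool \<times> nat) list" where
  "signs i u = [(u ! p = i, p). p \<leftarrow> [0..<length u], u ! p = i \<or> u ! p = Suc i]"

text \<open>Repeated deletion of factors -+ (stack reduction; acc is the reversed reduced prefix).\<close>
fun reduce_signs :: "(bool \<times> nat) list \<Rightarrow> (bool \<times> nat) list \<Rightarrow> (bool \<times> nat) list" where
  "reduce_signs acc [] = rev acc"
| "reduce_signs acc (x # xs) =
     (if fst x \<and> acc \<noteq> [] \<and> \<not> fst (hd acc) then reduce_signs (tl acc) xs
      else reduce_signs (x # acc) xs)"

definition kashiwara_f :: "nat \<Rightarrow> nat list \<Rightarrow> nat list option" where
  "kashiwara_f i u =
     (let ps = [snd s. s \<leftarrow> reduce_signs [] (signs i u), fst s]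
      in if ps = [] then None else Some (u[last ps := Suc i]))"

definition quasi_f :: "nat \<Rightarrow> nat list \<Rightarrow> nat list option" where
  "quasi_f i u =
     (if has_subseq2 u (Suc i) i \<or> i \<notin> set u then None
      else Some (u[last [p. p \<leftarrow> [0..<length u], u ! p = i] := Suc i]))"

definition plac_edges :: "(nat list \<times> nat list) set" where
  "plac_edges = {(u, v). word u \<and> (\<exists>i\<ge>1. kashiwara_f i u = Some v)}"

definition hypo_edges :: "(nat list \<times> nat list) set" where
  "hypo_edges = {(u, v). word u \<and> (\<exists>i\<ge>1. quasi_f i u = Some v)}"

definition component :: "(nat list \<times> nat list) set \<Rightarrow> nat list \<Rightarrow> nat list set" where
  "component E u = ((E \<union> E\<inverse>)\<^sup>*) `` {u}"

definition plac_components :: "nat list set set" where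
  "plac_components = {component plac_edges u | u. word u}"

definition hypo_components :: "nat list set set" where
  "hypo_components = {component hypo_edges u | u. word u}"

text \<open>Row insertion of x into a tableau given as list of rows (top row first).\<close>
fun row_insert :: "nat \<Rightarrow> nat list list \<Rightarrow> nat list list" where
  "row_insert x [] = [[x]]"
| "row_insert x (r # rs) =
     (let k = length (takeWhile (\<lambda>y. y \<le> x) r)
      in if k = length r then (r @ [x]) # rs
         else (r[k := x]) # row_insert (r ! k) rs)"

definition schensted_P :: "nat list \<Rightarrow> nat list list" where
  "schensted_P u = foldl (\<lambda>T x. row_insert x T) [] u"

definition tableau_shape :: "nat list list \<Rightarrow> nat list" where
  "tableau_shape T = map length T"

text \<open>Group the increasing list of distinct letters into rows: consecutive letters a < b
  go into different rows iff u contains the subsequence b a.\<close>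
fun qr_groups :: "nat list \<Rightarrow> nat list \<Rightarrow> nat list list" where
  "qr_groups u [] = []"
| "qr_groups u [a] = [[a]]"
| "qr_groups u (a # b # rest) =
     (let g = qr_groups u (b # rest)
      in if has_subseq2 u b a then [a] # g else (a # hd g) # tl g)"

definition qr_tableau :: "nat list \<Rightarrow> nat list list" where
  "qr_tableau u = map (\<lambda>g. concat (map (\<lambda>a. replicate (count_list u a) a) g))
                      (qr_groups u (sorted_list_of_set (set u)))"

definition qr_shape :: "nat list \<Rightarrow> nat list" where
  "qr_shape u = map length (qr_tableau u)"

end

theory Submission
  imports Defs "HOL-Library.Multiset"
begin


definition S :: "nat \<Rightarrow> nat list \<Rightarrow> nat \<Rightarrow> int" where
  "S i u t = int (count_list (take t u) i) - int (count_list (take t u) (Suc i))"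

definition recp :: "nat \<Rightarrow> nat list \<Rightarrow> nat \<Rightarrow> bool" where
  "recp i u p \<longleftrightarrow> p < length u \<and> u!p = i \<and> (\<forall>t\<le>p. S i u t < S i u (Suc p))"

definition Mx :: "nat \<Rightarrow> nat list \<Rightarrow> int" where
  "Mx i u = Max (S i u ` {..length u})"

definition stp :: "(bool \<times> nat) list \<Rightarrow> bool \<times> nat \<Rightarrow> (bool \<times> nat) list" where
  "stp acc x = (if fst x \<and> acc \<noteq> [] \<and> \<not> fst (hd acc) then tl acc else x # acc)"

lemma reduce_signs_foldl: "reduce_signs acc xs = rev (foldl stp acc xs)"
  by (induction acc xs rule: reduce_signs.induct) (auto simp: stp_def)

lemma signs_snoc: "signs i (u @ [x]) = signs i u @ (if x = i \<or> x = Suc i then [(x = i, length u)] else [])"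
proof -
  have "signs i (u @ [x]) = [((u@[x]) ! p = i, p). p \<leftarrow> [0..<length u], (u@[x]) ! p = i \<or> (u@[x]) ! p = Suc i]
        @ [((u@[x]) ! p = i, p). p \<leftarrow> [length u], (u@[x]) ! p = i \<or> (u@[x]) ! p = Suc i]"
    unfolding signs_def by simp
  also have "[((u@[x]) ! p = i, p). p \<leftarrow> [0..<length u], (u@[x]) ! p = i \<or> (u@[x]) ! p = Suc i] = signs i u"
    unfolding signs_def by (intro arg_cong[where f=concat] map_cong) (auto simp: nth_append)
  finally show ?thesis by simp
qed

lemma S_snoc: "t \<le> length u \<Longrightarrow> S i (u @ [x]) t = S i u t"
  by (simp add: S_def)

lemma S_snoc_last: "S i (u @ [x]) (Suc (length u)) = S i u (length u) + (if x = i then 1 else if x = Suc i then -1 else 0)"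
  by (simp add: S_def)

lemma S_0[simp]: "S i u 0 = 0" by (simp add: S_def)

lemma recp_snoc: "p < length u \<Longrightarrow> recp i (u @ [x]) p = recp i u p"
  unfolding recp_def by (auto simp: S_snoc nth_append)

lemma recp_lt: "recp i u p \<Longrightarrow> p < length u" by (simp add: recp_def)

lemma Mx_ge: "t \<le> length u \<Longrightarrow> S i u t \<le> Mx i u"
  unfolding Mx_def by (rule Max_ge) auto

lemma Mx_snoc: "Mx i (u @ [x]) = max (Mx i u) (S i (u@[x]) (Suc (length u)))"
proof -
  have "{..length (u@[x])} = insert (Suc (length u)) {..length u}" by auto
  then have "S i (u@[x]) ` {..length (u@[x])} = insert (S i (u@[x]) (Suc (length u))) (S i u ` {..length u})"
    using S_snoc by auto
  then show ?thesis unfolding Mx_def by (simp add: Max_insert max.commute)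
qed

lemma Mx_ex: "\<exists>t\<le>length u. S i u t = Mx i u"
proof -
  have "Mx i u \<in> S i u ` {..length u}" unfolding Mx_def by (rule Max_in) auto
  then show ?thesis by auto
qed

lemma filter_upt_snoc: "filter P [0..<Suc n] = filter P [0..<n] @ (if P n then [n] else [])"
  by simp

lemma main_inv:
  "\<exists>Ms. foldl stp [] (signs i u) = Ms @ rev (map (\<lambda>p. (True,p)) (filter (recp i u) [0..<length u]))
     \<and> (\<forall>m\<in>set Ms. \<not> fst m) \<and> int (length Ms) = Mx i u - S i u (length u)"
proof (induction u rule: rev_induct)
  case Nil
  then show ?case by (simp add: signs_def Mx_def)
next
  case (snoc x u)
  obtain Ms where IH: "foldl stp [] (signs i u) = Ms @ rev (map (\<lambda>p. (True,p)) (filter (recp i u) [0..<length u]))"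
    "\<forall>m\<in>set Ms. \<not> fst m" "int (length Ms) = Mx i u - S i u (length u)"
    using snoc by blast
  let ?R = "filter (recp i u) [0..<length u]"
  have fR: "filter (recp i (u@[x])) [0..<length u] = ?R"
    by (rule filter_cong) (auto simp: recp_snoc)
  have SleM: "S i u (length u) \<le> Mx i u" by (rule Mx_ge) simp
  have Mx': "Mx i (u@[x]) = max (Mx i u) (S i (u@[x]) (Suc (length u)))" by (rule Mx_snoc)
  have rec_new: "recp i (u@[x]) (length u) \<longleftrightarrow> x = i \<and> S i u (length u) = Mx i u"
  proof
    assume r: "recp i (u@[x]) (length u)"
    then have xi: "x = i" by (simp add: recp_def)
    obtain t where t: "t \<le> length u" "S i u t = Mx i u" using Mx_ex by blast
    have "S i (u@[x]) t < S i (u@[x]) (Suc (length u))" using r t(1) unfolding recp_def by blast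
    then have "Mx i u < S i u (length u) + 1" using t xi by (simp add: S_snoc S_snoc_last)
    then show "x = i \<and> S i u (length u) = Mx i u" using SleM xi by simp
  next
    assume a: "x = i \<and> S i u (length u) = Mx i u"
    have "\<And>t. t \<le> length u \<Longrightarrow> S i (u@[x]) t < S i (u@[x]) (Suc (length u))"
    proof -
      fix t assume t: "t \<le> length u"
      have "S i (u@[x]) t = S i u t" using t by (rule S_snoc)
      also have "\<dots> \<le> Mx i u" using t by (rule Mx_ge)
      also have "\<dots> < S i (u@[x]) (Suc (length u))" using a by (simp add: S_snoc_last)
      finally show "S i (u@[x]) t < S i (u@[x]) (Suc (length u))" .
    qed
    then show "recp i (u@[x]) (length u)"
      unfolding recp_def using a by auto
  qed
  show ?case
  proof (cases "x = i")
    case True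
    show ?thesis
    proof (cases "Ms = []")
      case Ms: True
      then have eq: "S i u (length u) = Mx i u" using IH(3) by simp
      have "foldl stp [] (signs i (u@[x])) = stp (rev (map (\<lambda>p. (True,p)) ?R)) (True, length u)"
        using IH(1) Ms True by (simp add: signs_snoc)
      also have "\<dots> = rev (map (\<lambda>p. (True,p)) (?R @ [length u]))"
        by (cases "?R" rule: rev_cases) (auto simp: stp_def)
      finally show ?thesis using rec_new True eq fR Mx' S_snoc_last[of i u x]
        by (intro exI[of _ "[]"]) (simp add: filter_upt_snoc)
    next
      case Ms: False
      have ne: "S i u (length u) \<noteq> Mx i u" using IH(3) Ms by (cases Ms) auto
      have "foldl stp [] (signs i (u@[x])) = stp (Ms @ rev (map (\<lambda>p. (True,p)) ?R)) (True, length u)"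
        using IH(1) True by (simp add: signs_snoc)
      also have "\<dots> = tl Ms @ rev (map (\<lambda>p. (True,p)) ?R)"
        using Ms IH(2) by (cases Ms) (auto simp: stp_def)
      finally show ?thesis using rec_new True ne fR Mx' S_snoc_last[of i u x] IH(2,3) Ms SleM
        by (intro exI[of _ "tl Ms"]) (auto simp: filter_upt_snoc list.set_sel(2))
    qed
  next
    case False
    show ?thesis
    proof (cases "x = Suc i")
      case True
      have "foldl stp [] (signs i (u@[x])) = stp (Ms @ rev (map (\<lambda>p. (True,p)) ?R)) (False, length u)"
        using IH(1) True False by (simp add: signs_snoc)
      also have "\<dots> = (False, length u) # Ms @ rev (map (\<lambda>p. (True,p)) ?R)"
        by (simp add: stp_def)
      finally show ?thesis using rec_new True False fR Mx' S_snoc_last[of i u x] IH(2,3) SleM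
        by (intro exI[of _ "(False, length u) # Ms"]) (auto simp: filter_upt_snoc)
    next
      case F2: False
      have "foldl stp [] (signs i (u@[x])) = Ms @ rev (map (\<lambda>p. (True,p)) ?R)"
        using IH(1) F2 False by (simp add: signs_snoc)
      then show ?thesis using rec_new F2 False fR Mx' S_snoc_last[of i u x] IH(2,3) SleM
        by (intro exI[of _ "Ms"]) (auto simp: filter_upt_snoc)
    qed
  qed
qed

lemma kashiwara_char:
  "kashiwara_f i u = (let ps = filter (recp i u) [0..<length u] in
      if ps = [] then None else Some (u[last ps := Suc i]))"
proof -
  obtain Ms where M: "foldl stp [] (signs i u) = Ms @ rev (map (\<lambda>p. (True,p)) (filter (recp i u) [0..<length u]))"
     "\<forall>m\<in>set Ms. \<not> fst m" using main_inv by blast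
  have F: "filter fst (rev Ms) = []" using M(2) by (simp add: filter_empty_conv)
  have gen: "\<And>xs::(bool\<times>nat) list. [snd s. s \<leftarrow> xs, fst s] = map snd (filter fst xs)"
    subgoal for xs by (induction xs) auto done
  have "[snd s. s \<leftarrow> reduce_signs [] (signs i u), fst s] = map snd (filter fst (reduce_signs [] (signs i u)))"
    by (rule gen)
  also have "\<dots> = filter (recp i u) [0..<length u]"
    unfolding reduce_signs_foldl M(1) using F by (simp add: comp_def)
  finally show ?thesis unfolding kashiwara_f_def by simp
qed


lemma S_Suc: "p < length u \<Longrightarrow> S i u (Suc p) = S i u p + (if u!p = i then 1 else if u!p = Suc i then -1 else 0)"
  by (simp add: S_def take_Suc_conv_app_nth)

lemma S_len: "S i u (length u) = int (count_list u i) - int (count_list u (Suc i))"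
  by (simp add: S_def)

lemma last_filter_upt:
  assumes "P p" "p < n" "\<And>q. p < q \<Longrightarrow> q < n \<Longrightarrow> \<not> P q"
  shows "last (filter P [0..<n]) = p"
proof -
  have gen: "\<And>m. m \<le> n \<Longrightarrow> (\<forall>q. m \<le> q \<and> q < n \<longrightarrow> \<not> P q) \<Longrightarrow> filter P [0..<n] = filter P [0..<m]"
  proof -
    fix m assume "m \<le> n" "\<forall>q. m \<le> q \<and> q < n \<longrightarrow> \<not> P q"
    then show "filter P [0..<n] = filter P [0..<m]"
      by (induction n) (auto simp: le_Suc_eq)
  qed
  have "filter P [0..<n] = filter P [0..<Suc p]"
    by (rule gen) (use assms in auto)
  then show ?thesis using assms(1) by simp
qed

lemma exists_rec:
  assumes "t \<le> length u" "S i u t > 0"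
  shows "\<exists>p. recp i u p"
proof -
  define t0 where "t0 = (LEAST t. S i u t > 0)"
  have t0: "S i u t0 > 0" unfolding t0_def by (rule LeastI[of _ t]) (use assms in auto)
  have t0le: "t0 \<le> t" unfolding t0_def by (rule Least_le) (use assms in auto)
  have less: "\<And>t'. t' < t0 \<Longrightarrow> S i u t' \<le> 0" unfolding t0_def using not_less_Least by fastforce
  have "t0 \<noteq> 0" using t0 by (metis S_0 less_irrefl)
  then obtain p where p: "t0 = Suc p" by (cases t0) auto
  have plen: "p < length u" using p t0le assms(1) by simp
  have "S i u p \<le> 0" using less p by simp
  then have "u!p = i" using S_Suc[OF plen, of i] t0 p by (auto split: if_splits)
  moreover have "\<forall>t'\<le>p. S i u t' < S i u (Suc p)"
  proof (intro allI impI)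
    fix t' assume "t' \<le> p"
    then have "S i u t' \<le> 0" using less p by simp
    then show "S i u t' < S i u (Suc p)" using t0 p by simp
  qed
  ultimately show ?thesis using plen unfolding recp_def by blast
qed

lemma f_none_ballot:
  assumes "kashiwara_f i u = None" "t \<le> length u"
  shows "S i u t \<le> 0"
proof (rule ccontr)
  assume "\<not> S i u t \<le> 0"
  then obtain p where "recp i u p" using exists_rec assms(2) by force
  then have "filter (recp i u) [0..<length u] \<noteq> []" using recp_lt by (auto simp: filter_empty_conv)
  then show False using assms(1) by (simp add: kashiwara_char Let_def)
qed

lemma f_step:
  assumes "count_list u (Suc i) < count_list u i"
  shows "\<exists>p<length u. u!p = i \<and> kashiwara_f i u = Some (u[p := Suc i])"
proof -
  have "S i u (length u) > 0" using assms by (simp add: S_len)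
  then obtain q where "recp i u q" using exists_rec by blast
  then have ne: "filter (recp i u) [0..<length u] \<noteq> []" using recp_lt by (auto simp: filter_empty_conv)
  obtain r where r: "r = last (filter (recp i u) [0..<length u])" by blast
  have "r \<in> set (filter (recp i u) [0..<length u])" unfolding r using ne by (rule last_in_set)
  then have rr: "recp i u r" by (simp only: set_filter) blast
  have k: "kashiwara_f i u = Some (u[r := Suc i])" using ne by (simp add: kashiwara_char Let_def r)
  have "r < length u" "u!r = i" using rr unfolding recp_def by auto
  then show ?thesis using k by blast
qed

lemma count_list_upd: "q < length xs \<Longrightarrow> count_list (xs[q := y]) z + (if xs!q = z then 1 else 0) = count_list xs z + (if y = z then 1 else 0)"
proof (induction xs arbitrary: q)
  case Nil then show ?case by simp
next
  case (Cons a xs)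
  show ?case
  proof (cases q)
    case 0 then show ?thesis by simp
  next
    case (Suc q') then show ?thesis using Cons.IH[of q'] Cons.prems by (auto split: if_splits)
  qed
qed

definition dl :: "nat \<Rightarrow> nat \<Rightarrow> int" where
  "dl i y = (if y = i then 1 else if y = Suc i then -1 else 0)"

lemma S_Suc': "p < length u \<Longrightarrow> S i u (Suc p) = S i u p + dl i (u!p)"
  by (simp add: S_Suc dl_def)

lemma S_upd:
  assumes "p < length u"
  shows "S i (u[p := y]) t = (if t \<le> p then S i u t else S i u t + dl i y - dl i (u!p))"
proof -
  have cnt: "\<And>(xs::nat list) y z q. q < length xs \<Longrightarrow> int (count_list (xs[q := y]) z) = int (count_list xs z) - (if xs!q = z then 1 else 0) + (if y = z then 1 else 0)"
  proof -
    fix xs :: "nat list" and y z q assume "q < length xs"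
    from count_list_upd[OF this, of y z] show "int (count_list (xs[q := y]) z) = int (count_list xs z) - (if xs!q = z then 1 else 0) + (if y = z then 1 else 0)"
      by (auto split: if_splits)
  qed
  show ?thesis
  proof (cases "t \<le> p")
    case True then show ?thesis by (simp add: S_def)
  next
    case False
    then have "take t (u[p := y]) = (take t u)[p := y]" by (simp add: take_update_swap)
    moreover have "p < length (take t u)" "(take t u)!p = u!p" using False assms by auto
    ultimately show ?thesis using False unfolding S_def dl_def by (simp add: cnt)
  qed
qed

lemma Mx_eqI:
  assumes "\<And>t. t \<le> length u \<Longrightarrow> S i u t \<le> m" "t0 \<le> length u" "S i u t0 = m"
  shows "Mx i u = m"
proof -
  have "Mx i u \<le> m" using Mx_ex[of u i] assms(1) by force
  moreover have "m \<le> Mx i u" using Mx_ge[OF assms(2), of i] assms(3) by simp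
  ultimately show ?thesis by simp
qed

lemma dl_simps[simp]: "dl i i = 1" "dl i (Suc i) = -1"
  by (auto simp: dl_def)

lemma Mx_nonneg: "0 \<le> Mx i u"
  using Mx_ge[of 0 u i] by simp

lemma f_step2:
  assumes "Mx i u > 0"
  shows "\<exists>p<length u. u!p = i \<and> kashiwara_f i u = Some (u[p := Suc i]) \<and> Mx i (u[p := Suc i]) = Mx i u - 1"
proof -
  define M where "M = Mx i u"
  obtain t1 where t1: "t1 \<le> length u" "S i u t1 = M" using Mx_ex unfolding M_def by blast
  define t0 where "t0 = (LEAST t. S i u t = M)"
  have t0: "S i u t0 = M" unfolding t0_def by (rule LeastI[of _ t1]) (use t1 in auto)
  have t0le: "t0 \<le> t1" unfolding t0_def by (rule Least_le) (use t1 in auto)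
  have Mge: "\<And>t. t \<le> length u \<Longrightarrow> S i u t \<le> M" unfolding M_def by (rule Mx_ge)
  have less: "\<And>t'. t' < t0 \<Longrightarrow> S i u t' < M"
  proof -
    fix t' assume a: "t' < t0"
    have "S i u t' \<noteq> M" using not_less_Least[OF a[unfolded t0_def]] .
    moreover have "S i u t' \<le> M" using Mge a t0le t1(1) by simp
    ultimately show "S i u t' < M" by simp
  qed
  have "t0 \<noteq> 0" using t0 assms unfolding M_def by (metis S_0 less_irrefl)
  then obtain p where p: "t0 = Suc p" by (cases t0) auto
  have plen: "p < length u" using p t0le t1(1) by simp
  have Sp: "S i u p < M" using less p by simp
  have up: "u!p = i"
  proof (rule ccontr)
    assume "u!p \<noteq> i"
    then have "dl i (u!p) \<le> 0" by (simp add: dl_def)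
    then show False using S_Suc'[OF plen, of i] t0 p Sp by simp
  qed
  have SpM: "S i u p = M - 1" using S_Suc'[OF plen, of i] t0 p up by simp
  have rp: "recp i u p" unfolding recp_def using plen up less p t0 by auto
  have nr: "\<And>q. p < q \<Longrightarrow> q < length u \<Longrightarrow> \<not> recp i u q"
  proof
    fix q assume a: "p < q" "q < length u" "recp i u q"
    then have "S i u (Suc p) < S i u (Suc q)" unfolding recp_def by auto
    moreover have "S i u (Suc q) \<le> M" using Mge a by simp
    ultimately show False using t0 p by simp
  qed
  have ne: "filter (recp i u) [0..<length u] \<noteq> []" using rp recp_lt by (auto simp: filter_empty_conv)
  have lp: "last (filter (recp i u) [0..<length u]) = p"
    by (rule last_filter_upt[where P="recp i u" and p=p]) (use rp plen nr in auto)
  have k: "kashiwara_f i u = Some (u[p := Suc i])" using ne lp by (simp add: kashiwara_char Let_def)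
  have Sv: "\<And>t. S i (u[p := Suc i]) t = (if t \<le> p then S i u t else S i u t - 2)"
    using S_upd[OF plen, of i "Suc i"] up by simp
  have "Mx i (u[p := Suc i]) = M - 1"
  proof (rule Mx_eqI[of _ _ _ p])
    fix t assume t: "t \<le> length (u[p := Suc i])"
    show "S i (u[p := Suc i]) t \<le> M - 1"
    proof (cases "t \<le> p")
      case True then show ?thesis using Sv less p by fastforce
    next
      case False then show ?thesis using Sv Mge t by fastforce
    qed
  next
    show "p \<le> length (u[p := Suc i])" using plen by simp
    show "S i (u[p := Suc i]) p = M - 1" using Sv SpM by simp
  qed
  then show ?thesis using plen up k unfolding M_def by blast
qed

lemma e_step2:
  assumes "S i u (length u) < Mx i u"
  shows "\<exists>p<length u. u!p = Suc i \<and> kashiwara_f i (u[p := i]) = Some u \<and> Mx i (u[p := i]) = Mx i u + 1"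
proof -
  define M where "M = Mx i u"
  define P where "P = {t. t \<le> length u \<and> S i u t = M}"
  have finP: "finite P" unfolding P_def by simp
  have neP: "P \<noteq> {}" unfolding P_def M_def using Mx_ex by auto
  define p where "p = Max P"
  have pP: "p \<in> P" unfolding p_def using finP neP by (rule Max_in)
  have Mge: "\<And>t. t \<le> length u \<Longrightarrow> S i u t \<le> M" unfolding M_def by (rule Mx_ge)
  have after: "\<And>t. p < t \<Longrightarrow> t \<le> length u \<Longrightarrow> S i u t < M"
  proof -
    fix t assume a: "p < t" "t \<le> length u"
    have "t \<notin> P" using a(1) Max_ge[OF finP] unfolding p_def by force
    then show "S i u t < M" using Mge[OF a(2)] a(2) unfolding P_def by auto
  qed
  have ple: "p \<le> length u" and SpM: "S i u p = M" using pP unfolding P_def by auto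
  have "p \<noteq> length u" using SpM assms unfolding M_def by auto
  then have plt: "p < length u" using ple by simp
  have "S i u (Suc p) < M" using after[of "Suc p"] plt by simp
  then have up: "u!p = Suc i" using S_Suc'[OF plt, of i] SpM by (auto simp: dl_def split: if_splits)
  have Sp1: "S i u (Suc p) = M - 1" using S_Suc'[OF plt, of i] SpM up by simp
  let ?v = "u[p := i]"
  have Sv: "\<And>t. S i ?v t = (if t \<le> p then S i u t else S i u t + 2)"
    using S_upd[OF plt, of i i] up by simp
  have lv: "length ?v = length u" by simp
  have vp: "?v ! p = i" using plt by simp
  have Sv1: "S i ?v (Suc p) = M + 1" using Sv Sp1 by simp
  have rp: "recp i ?v p"
    unfolding recp_def
  proof (intro conjI allI impI)
    show "p < length ?v" using plt by simp
    show "?v ! p = i" by (rule vp)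
    fix t assume "t \<le> p"
    then have "S i ?v t = S i u t" using Sv by simp
    also have "\<dots> \<le> M" using Mge \<open>t \<le> p\<close> plt by simp
    finally show "S i ?v t < S i ?v (Suc p)" using Sv1 by simp
  qed
  have nr: "\<And>q. p < q \<Longrightarrow> q < length ?v \<Longrightarrow> \<not> recp i ?v q"
  proof
    fix q assume a: "p < q" "q < length ?v" "recp i ?v q"
    then have "S i ?v (Suc p) < S i ?v (Suc q)" unfolding recp_def by auto
    moreover have "S i ?v (Suc q) = S i u (Suc q) + 2" using Sv a(1) by simp
    moreover have "S i u (Suc q) < M" using after[of "Suc q"] a by simp
    ultimately show False using Sv1 by simp
  qed
  have "p \<in> set (filter (recp i ?v) [0..<length ?v])" using rp plt by (simp only: set_filter set_upt length_list_update) auto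
  then have ne: "filter (recp i ?v) [0..<length ?v] \<noteq> []" by (metis empty_iff set_empty)
  have "last (filter (recp i ?v) [0..<length ?v]) = p"
    by (rule last_filter_upt[where P="recp i ?v" and p=p]) (use rp plt nr in auto)
  then have "kashiwara_f i ?v = Some (?v[p := Suc i])" using ne by (simp add: kashiwara_char Let_def)
  also have "?v[p := Suc i] = u" using up by (metis list_update_id list_update_overwrite)
  finally have k: "kashiwara_f i ?v = Some u" .
  have "Mx i ?v = M + 1"
  proof (rule Mx_eqI[of _ _ _ "Suc p"])
    fix t assume t: "t \<le> length ?v"
    show "S i ?v t \<le> M + 1"
    proof (cases "t \<le> p")
      case True then show ?thesis using Sv Mge t by fastforce
    next
      case False
      then have "S i u t < M" using after t by simp
      then show ?thesis using Sv False by simp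
    qed
  next
    show "Suc p \<le> length ?v" using plt by simp
    show "S i ?v (Suc p) = M + 1" by (rule Sv1)
  qed
  then show ?thesis using plt up k unfolding M_def by blast
qed

lemma quasi_kashiwara:
  assumes "quasi_f i u = Some v"
  shows "kashiwara_f i u = Some v"
proof -
  have ns: "\<not> has_subseq2 u (Suc i) i" and iu: "i \<in> set u" using assms by (auto simp: quasi_f_def split: if_splits)
  have eq: "\<And>p. p < length u \<Longrightarrow> recp i u p \<longleftrightarrow> u!p = i"
  proof
    fix p assume pl: "p < length u"
    show "recp i u p \<Longrightarrow> u!p = i" by (simp add: recp_def)
    assume up: "u!p = i"
    have "\<And>t. t \<le> p \<Longrightarrow> S i u t < S i u (Suc p)"
    proof -
      fix t assume "t \<le> p"
      have c1: "count_list (take (Suc p) u) (Suc i) = 0"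
      proof -
        have "Suc i \<notin> set (take (Suc p) u)"
        proof
          assume "Suc i \<in> set (take (Suc p) u)"
          then obtain q where q: "q < length (take (Suc p) u)" "take (Suc p) u ! q = Suc i" by (auto simp: in_set_conv_nth)
          then have "q < p" using up pl by (cases "q = p") auto
          then show False using ns q pl up unfolding has_subseq2_def by auto
        qed
        then show ?thesis by simp
      qed
      have c2: "count_list (take t u) (Suc i) = 0"
      proof -
        have "set (take t u) \<subseteq> set (take (Suc p) u)" using \<open>t \<le> p\<close> by (intro set_take_subset_set_take) simp
        then show ?thesis using c1 by (auto simp: count_list_0_iff)
      qed
      have "count_list (take t u) i < count_list (take (Suc p) u) i"
      proof -
        have e: "take t (take (Suc p) u) = take t u" using \<open>t \<le> p\<close> by (simp add: min_def)
        have "take (Suc p) u = take t u @ drop t (take (Suc p) u)" by (metis e append_take_drop_id)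
        moreover have "i \<in> set (drop t (take (Suc p) u))"
          using up pl \<open>t \<le> p\<close> by (auto simp: in_set_conv_nth intro!: exI[of _ "p - t"])
        then have "count_list (drop t (take (Suc p) u)) i > 0" by (metis count_list_0_iff gr0I)
        ultimately show ?thesis by (metis count_list_append less_add_same_cancel1)
      qed
      then show "S i u t < S i u (Suc p)" using c1 c2 by (simp add: S_def)
    qed
    then show "recp i u p" using pl up by (simp add: recp_def)
  qed
  have "filter (recp i u) [0..<length u] = filter (\<lambda>p. u!p = i) [0..<length u]"
    by (rule filter_cong) (auto simp: eq)
  moreover have "\<And>xs. [p. p \<leftarrow> xs, u ! p = i] = filter (\<lambda>p. u!p = i) xs"
    subgoal for xs by (induction xs) auto done
  moreover have "filter (\<lambda>p. u!p = i) [0..<length u] \<noteq> []" using iu by (auto simp: filter_empty_conv in_set_conv_nth)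
  ultimately show ?thesis using assms ns iu by (simp add: kashiwara_char quasi_f_def Let_def split: if_splits)
qed


definition RR :: "(nat list \<times> nat list) set" where "RR = plac_edges \<union> plac_edges\<inverse>"

definition sw :: "nat \<Rightarrow> nat \<Rightarrow> nat" where
  "sw i x = (if x = i then Suc i else if x = Suc i then i else x)"

lemma word_upd: "word u \<Longrightarrow> 0 < y \<Longrightarrow> word (u[p := y])"
  unfolding word_def using set_update_subset_insert by fastforce

lemma cnt_upd_self: "p < length u \<Longrightarrow> u!p = a \<Longrightarrow> a \<noteq> y \<Longrightarrow>
   count_list (u[p := y]) a = count_list u a - 1 \<and> count_list (u[p := y]) y = count_list u y + 1 \<and>
   (\<forall>x. x \<noteq> a \<longrightarrow> x \<noteq> y \<longrightarrow> count_list (u[p := y]) x = count_list u x) \<and> count_list u a \<ge> 1"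
proof -
  assume a: "p < length u" "u!p = a" "a \<noteq> y"
  have "a \<in> set u" using a by (auto simp: in_set_conv_nth)
  then have "count_list u a \<ge> 1" by (metis count_list_0_iff less_one not_less)
  have h: "\<And>z. count_list (u[p := y]) z + (if a = z then 1 else 0) = count_list u z + (if y = z then 1 else 0)"
    using count_list_upd[OF a(1), of y] a(2) by simp
  have "count_list (u[p := y]) a = count_list u a - 1" using h[of a] a(3) by simp
  moreover have "count_list (u[p := y]) y = count_list u y + 1" using h[of y] a(3) by simp
  moreover have "\<forall>x. x \<noteq> a \<longrightarrow> x \<noteq> y \<longrightarrow> count_list (u[p := y]) x = count_list u x"
  proof (intro allI impI)
    fix x assume "x \<noteq> a" "x \<noteq> y"
    then show "count_list (u[p := y]) x = count_list u x" using h[of x] by simp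
  qed
  ultimately show ?thesis using \<open>count_list u a \<ge> 1\<close> by blast
qed

lemma iter_f:
  assumes "i \<ge> 1"
  shows "word u \<Longrightarrow> (w0,u) \<in> RR\<^sup>* \<Longrightarrow> int n \<le> Mx i u \<Longrightarrow>
    \<exists>u'. word u' \<and> (w0,u') \<in> RR\<^sup>* \<and> count_list u' i = count_list u i - n \<and>
      count_list u' (Suc i) = count_list u (Suc i) + n \<and> (\<forall>x. x \<noteq> i \<longrightarrow> x \<noteq> Suc i \<longrightarrow> count_list u' x = count_list u x)"
proof (induction n arbitrary: u)
  case 0 then show ?case by auto
next
  case (Suc n)
  have "Mx i u > 0" using Suc.prems by simp
  then obtain p where p: "p < length u" "u!p = i" "kashiwara_f i u = Some (u[p := Suc i])"
     "Mx i (u[p := Suc i]) = Mx i u - 1" using f_step2 by blast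
  let ?u1 = "u[p := Suc i]"
  have w1: "word ?u1" using Suc.prems(1) by (rule word_upd) simp
  have "(u, ?u1) \<in> plac_edges" unfolding plac_edges_def using Suc.prems(1) p(3) assms by auto
  then have r1: "(w0, ?u1) \<in> RR\<^sup>*" using Suc.prems(2) unfolding RR_def by (meson UnI1 rtrancl.rtrancl_into_rtrancl)
  have c: "count_list ?u1 i = count_list u i - 1" "count_list ?u1 (Suc i) = count_list u (Suc i) + 1"
     "\<And>x. x \<noteq> i \<Longrightarrow> x \<noteq> Suc i \<Longrightarrow> count_list ?u1 x = count_list u x"
    using cnt_upd_self[OF p(1,2), of "Suc i"] by auto
  have "int n \<le> Mx i ?u1" using Suc.prems(3) p(4) by simp
  then obtain u' where u': "word u'" "(w0,u') \<in> RR\<^sup>*" "count_list u' i = count_list ?u1 i - n"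
      "count_list u' (Suc i) = count_list ?u1 (Suc i) + n" "\<forall>x. x \<noteq> i \<longrightarrow> x \<noteq> Suc i \<longrightarrow> count_list u' x = count_list ?u1 x"
    using Suc.IH[OF w1 r1] by blast
  show ?case using u' c by (intro exI[of _ u']) auto
qed

lemma iter_e:
  assumes "i \<ge> 1"
  shows "word u \<Longrightarrow> (w0,u) \<in> RR\<^sup>* \<Longrightarrow> int n \<le> Mx i u - S i u (length u) \<Longrightarrow>
    \<exists>u'. word u' \<and> (w0,u') \<in> RR\<^sup>* \<and> count_list u' i = count_list u i + n \<and>
      count_list u' (Suc i) = count_list u (Suc i) - n \<and> (\<forall>x. x \<noteq> i \<longrightarrow> x \<noteq> Suc i \<longrightarrow> count_list u' x = count_list u x)"
proof (induction n arbitrary: u)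
  case 0 then show ?case by auto
next
  case (Suc n)
  have "S i u (length u) < Mx i u" using Suc.prems by simp
  then obtain p where p: "p < length u" "u!p = Suc i" "kashiwara_f i (u[p := i]) = Some u"
     "Mx i (u[p := i]) = Mx i u + 1" using e_step2 by blast
  let ?u1 = "u[p := i]"
  have w1: "word ?u1" using Suc.prems(1) by (rule word_upd) (use assms in simp)
  have "(?u1, u) \<in> plac_edges" unfolding plac_edges_def using w1 p(3) assms by auto
  then have r1: "(w0, ?u1) \<in> RR\<^sup>*" using Suc.prems(2) unfolding RR_def by (meson UnI2 converseI rtrancl.rtrancl_into_rtrancl)
  have c: "count_list ?u1 (Suc i) = count_list u (Suc i) - 1" "count_list ?u1 i = count_list u i + 1"
     "\<And>x. x \<noteq> i \<Longrightarrow> x \<noteq> Suc i \<Longrightarrow> count_list ?u1 x = count_list u x"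
    using cnt_upd_self[OF p(1,2), of i] by auto
  have S1: "S i ?u1 (length ?u1) = S i u (length u) + 2"
    using S_upd[OF p(1), of i i "length u"] p(1,2) by simp
  have "int n \<le> Mx i ?u1 - S i ?u1 (length ?u1)" using Suc.prems(3) p(4) S1 by simp
  then obtain u' where u': "word u'" "(w0,u') \<in> RR\<^sup>*" "count_list u' i = count_list ?u1 i + n"
      "count_list u' (Suc i) = count_list ?u1 (Suc i) - n" "\<forall>x. x \<noteq> i \<longrightarrow> x \<noteq> Suc i \<longrightarrow> count_list u' x = count_list ?u1 x"
    using Suc.IH[OF w1 r1] by blast
  show ?case using u' c by (intro exI[of _ u']) auto
qed

lemma swap_reach:
  assumes "i \<ge> 1" "word u" "(w0,u) \<in> RR\<^sup>*"
  shows "\<exists>u'. word u' \<and> (w0,u') \<in> RR\<^sup>* \<and> (\<forall>x. count_list u' x = count_list u (sw i x))"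
proof (cases "count_list u (Suc i) \<le> count_list u i")
  case True
  let ?n = "count_list u i - count_list u (Suc i)"
  have "int ?n \<le> Mx i u" using Mx_ge[of "length u" u i] True by (simp add: S_len)
  then obtain u' where u': "word u'" "(w0,u') \<in> RR\<^sup>*" "count_list u' i = count_list u i - ?n"
      "count_list u' (Suc i) = count_list u (Suc i) + ?n" "\<forall>x. x \<noteq> i \<longrightarrow> x \<noteq> Suc i \<longrightarrow> count_list u' x = count_list u x"
    using iter_f[OF assms] by blast
  show ?thesis using u' True by (intro exI[of _ u']) (auto simp: sw_def)
next
  case False
  let ?n = "count_list u (Suc i) - count_list u i"
  have "int ?n \<le> Mx i u - S i u (length u)" using Mx_nonneg[of i u] False by (simp add: S_len)
  then obtain u' where u': "word u'" "(w0,u') \<in> RR\<^sup>*" "count_list u' i = count_list u i + ?n"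
      "count_list u' (Suc i) = count_list u (Suc i) - ?n" "\<forall>x. x \<noteq> i \<longrightarrow> x \<noteq> Suc i \<longrightarrow> count_list u' x = count_list u x"
    using iter_e[OF assms] by blast
  show ?thesis using u' False by (intro exI[of _ u']) (auto simp: sw_def)
qed

definition st_ok :: "nat list \<Rightarrow> nat \<Rightarrow> nat list \<Rightarrow> (nat \<Rightarrow> nat) \<Rightarrow> bool" where
  "st_ok u b xs c0 \<longleftrightarrow> (\<forall>j<length xs. count_list u (b+j) = xs!j) \<and> (\<forall>x. (x < b \<or> b + length xs \<le> x) \<longrightarrow> count_list u x = c0 x)"

lemma swap_list:
  assumes "b \<ge> 1" "word u" "(w0,u) \<in> RR\<^sup>*" "st_ok u b xs c0" "Suc m < length xs"
  shows "\<exists>u'. word u' \<and> (w0,u') \<in> RR\<^sup>* \<and> st_ok u' b (xs[m := xs!Suc m, Suc m := xs!m]) c0"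
proof -
  obtain u' where u': "word u'" "(w0,u') \<in> RR\<^sup>*" "\<forall>x. count_list u' x = count_list u (sw (b+m) x)"
    using swap_reach[of "b+m" u w0] assms by auto
  have "st_ok u' b (xs[m := xs!Suc m, Suc m := xs!m]) c0"
    unfolding st_ok_def
  proof (intro conjI allI impI)
    fix j assume j: "j < length (xs[m := xs!Suc m, Suc m := xs!m])"
    show "count_list u' (b+j) = xs[m := xs!Suc m, Suc m := xs!m] ! j"
      using u'(3) assms(4,5) j unfolding st_ok_def sw_def by (auto simp: nth_list_update)
  next
    fix x assume x: "x < b \<or> b + length (xs[m := xs!Suc m, Suc m := xs!m]) \<le> x"
    then have "sw (b+m) x = x" using assms(5) unfolding sw_def by auto
    then show "count_list u' x = c0 x" using u'(3) assms(4) x unfolding st_ok_def by auto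
  qed
  then show ?thesis using u' by blast
qed

lemma list_bubble_eq:
  assumes "Suc m < length xs"
  shows "(xs[m := xs!Suc m, Suc m := xs!m]) ! m # take m (xs[m := xs!Suc m, Suc m := xs!m]) @ drop (Suc m) (xs[m := xs!Suc m, Suc m := xs!m])
       = xs ! Suc m # take (Suc m) xs @ drop (Suc (Suc m)) xs"
proof -
  let ?y = "xs[m := xs!Suc m, Suc m := xs!m]"
  have "take m ?y = take m xs" by simp
  moreover have "drop (Suc m) ?y = xs!m # drop (Suc (Suc m)) xs"
  proof -
    have d1: "drop (Suc m) ?y = ?y!(Suc m) # drop (Suc (Suc m)) ?y"
      by (rule Cons_nth_drop_Suc[symmetric]) (use assms in simp)
    have d2: "drop (Suc (Suc m)) ?y = drop (Suc (Suc m)) xs" by (simp add: drop_update_cancel)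
    have d3: "?y!(Suc m) = xs!m" using assms by simp
    show ?thesis by (subst d1) (simp only: d2 d3)
  qed
  moreover have "take (Suc m) xs = take m xs @ [xs!m]" using assms by (simp add: take_Suc_conv_app_nth)
  ultimately show ?thesis using assms by simp
qed

lemma bubble:
  assumes "b \<ge> 1"
  shows "m < length xs \<Longrightarrow> word u \<Longrightarrow> (w0,u) \<in> RR\<^sup>* \<Longrightarrow> st_ok u b xs c0 \<Longrightarrow>
    \<exists>u'. word u' \<and> (w0,u') \<in> RR\<^sup>* \<and> st_ok u' b (xs!m # take m xs @ drop (Suc m) xs) c0"
proof (induction m arbitrary: xs u)
  case 0
  then show ?case by (intro exI[of _ u]) (cases xs, auto)
next
  case (Suc m)
  obtain u1 where u1: "word u1" "(w0,u1) \<in> RR\<^sup>*" "st_ok u1 b (xs[m := xs!Suc m, Suc m := xs!m]) c0"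
    using swap_list[OF assms Suc.prems(2,3,4,1)] by blast
  have "m < length (xs[m := xs!Suc m, Suc m := xs!m])" using Suc.prems(1) by simp
  from Suc.IH[OF this u1] obtain u' where "word u'" "(w0,u') \<in> RR\<^sup>*"
    "st_ok u' b ((xs[m := xs!Suc m, Suc m := xs!m]) ! m # take m (xs[m := xs!Suc m, Suc m := xs!m]) @ drop (Suc m) (xs[m := xs!Suc m, Suc m := xs!m])) c0"
    by blast
  then show ?case using list_bubble_eq[OF Suc.prems(1)] by auto
qed


definition fc_ok :: "nat list list \<Rightarrow> bool" where
  "fc_ok T \<longleftrightarrow> (\<forall>r\<in>set T. r \<noteq> []) \<and> (\<forall>r. Suc r < length T \<longrightarrow> T!r!0 < T!(Suc r)!0)"

lemma fc_ok_Nil[simp]: "fc_ok []" by (simp add: fc_ok_def)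

lemma fc_ok_Cons: "fc_ok (a # T) \<longleftrightarrow> a \<noteq> [] \<and> fc_ok T \<and> (T \<noteq> [] \<longrightarrow> a!0 < (hd T)!0)"
proof
  assume h: "fc_ok (a # T)"
  have "\<forall>r. Suc r < length T \<longrightarrow> T!r!0 < T!(Suc r)!0"
  proof (intro allI impI)
    fix r assume "Suc r < length T"
    then have "Suc (Suc r) < length (a#T)" by simp
    then have "(a#T)!(Suc r)!0 < (a#T)!(Suc (Suc r))!0" using h unfolding fc_ok_def by blast
    then show "T!r!0 < T!(Suc r)!0" by simp
  qed
  moreover have "T \<noteq> [] \<longrightarrow> a!0 < (hd T)!0"
    using h unfolding fc_ok_def by (cases T) force+
  ultimately show "a \<noteq> [] \<and> fc_ok T \<and> (T \<noteq> [] \<longrightarrow> a!0 < (hd T)!0)" using h unfolding fc_ok_def by auto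
next
  assume h: "a \<noteq> [] \<and> fc_ok T \<and> (T \<noteq> [] \<longrightarrow> a!0 < (hd T)!0)"
  have "\<forall>r. Suc r < length (a#T) \<longrightarrow> (a#T)!r!0 < (a#T)!(Suc r)!0"
  proof (intro allI impI)
    fix r assume r: "Suc r < length (a#T)"
    show "(a#T)!r!0 < (a#T)!(Suc r)!0"
    proof (cases r)
      case 0 then show ?thesis using h r by (cases T) auto
    next
      case (Suc r') then show ?thesis using h r unfolding fc_ok_def by auto
    qed
  qed
  then show "fc_ok (a # T)" using h unfolding fc_ok_def by auto
qed

lemma tw_lt: "j < length (takeWhile P r) \<Longrightarrow> P (r!j)"
proof -
  assume j: "j < length (takeWhile P r)"
  have "takeWhile P r ! j = r ! j" using j by (rule takeWhile_nth)
  moreover have "takeWhile P r ! j \<in> set (takeWhile P r)" using j by (rule nth_mem)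
  ultimately show ?thesis by (metis set_takeWhileD)
qed

lemma row_insert_ne: "row_insert x rs \<noteq> []"
  by (cases rs) (auto simp: Let_def)

lemma row_insert_hd:
  "fc_ok rs \<Longrightarrow> hd (row_insert x rs) ! 0 = (if rs = [] then x else min x (hd rs ! 0))"
proof (cases rs)
  case Nil then show ?thesis by simp
next
  case (Cons r rs')
  assume ok: "fc_ok rs"
  then have rne: "r \<noteq> []" using Cons by (simp add: fc_ok_Cons)
  define k where "k = length (takeWhile (\<lambda>y. y \<le> x) r)"
  show ?thesis
  proof (cases "k = length r")
    case True
    then have "r!0 \<le> x" using rne unfolding k_def
      using tw_lt[of 0 "\<lambda>y. y \<le> x" r] by simp
    then show ?thesis using True Cons rne by (simp add: Let_def k_def[symmetric] nth_append)
  next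
    case False
    show ?thesis
    proof (cases "k = 0")
      case True
      then have "\<not> r!0 \<le> x" using rne unfolding k_def by (cases r) auto
      then show ?thesis using True False Cons rne by (simp add: Let_def k_def[symmetric])
    next
      case k0: False
      then have "r!0 \<le> x" unfolding k_def
        using tw_lt[of 0 "\<lambda>y. y \<le> x" r] by simp
      then show ?thesis using k0 False Cons rne by (simp add: Let_def k_def[symmetric] min_def)
    qed
  qed
qed

lemma row_insert_ok: "fc_ok rs \<Longrightarrow> fc_ok (row_insert x rs)"
proof (induction x rs rule: row_insert.induct)
  case (1 x) then show ?case by (simp add: fc_ok_Cons)
next
  case (2 x r rs)
  have rne: "r \<noteq> []" and okrs: "fc_ok rs" and hdr: "rs \<noteq> [] \<Longrightarrow> r!0 < hd rs ! 0"
    using "2.prems" by (auto simp: fc_ok_Cons)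
  define k where "k = length (takeWhile (\<lambda>y. y \<le> x) r)"
  show ?case
  proof (cases "k = length r")
    case True
    then show ?thesis using "2.prems" rne by (simp add: Let_def k_def[symmetric] fc_ok_Cons nth_append)
  next
    case False
    then have kl: "k < length r" unfolding k_def by (metis length_takeWhile_le order_le_imp_less_or_eq)
    have rk: "\<not> r!k \<le> x" unfolding k_def using kl[unfolded k_def] nth_length_takeWhile by blast
    have ok2: "fc_ok (row_insert (r!k) rs)" using "2.IH"[OF k_def False okrs] .
    have hd2: "hd (row_insert (r!k) rs) ! 0 = (if rs = [] then r!k else min (r!k) (hd rs ! 0))"
      using row_insert_hd[OF okrs] .
    have r0: "(r[k := x]) ! 0 = (if k = 0 then x else r!0)" using rne by (cases k) auto
    have r0x: "k \<noteq> 0 \<Longrightarrow> r!0 \<le> x" unfolding k_def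
      using tw_lt[of 0 "\<lambda>y. y \<le> x" r] by simp
    have r0k: "r!0 \<le> r!k \<or> k = 0" using r0x rk by auto
    have lt: "(r[k := x]) ! 0 < hd (row_insert (r!k) rs) ! 0"
    proof (cases "rs = []")
      case True then show ?thesis using hd2 r0 rk r0x by auto
    next
      case rsne: False
      have a: "(r[k := x]) ! 0 < r!k" using r0 rk r0x by auto
      have b: "(r[k := x]) ! 0 < hd rs ! 0"
      proof (cases "k = 0")
        case True
        then have "x < r!0" using rk by simp
        then show ?thesis using r0 True hdr[OF rsne] by simp
      next
        case False then show ?thesis using r0 hdr[OF rsne] by simp
      qed
      show ?thesis using hd2 a b rsne by simp
    qed
    show ?thesis using False ok2 lt rne row_insert_ne[of "r!k" rs]
      by (simp add: Let_def k_def[symmetric] fc_ok_Cons)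
  qed
qed

lemma row_insert_set: "set (concat (row_insert x T)) \<subseteq> insert x (set (concat T))"
proof (induction x T rule: row_insert.induct)
  case (1 x) then show ?case by simp
next
  case (2 x r rs)
  define k where "k = length (takeWhile (\<lambda>y. y \<le> x) r)"
  show ?case
  proof (cases "k = length r")
    case True then show ?thesis by (simp add: Let_def k_def[symmetric])
  next
    case False
    then have kl: "k < length r" unfolding k_def by (metis length_takeWhile_le order_le_imp_less_or_eq)
    have "set (r[k := x]) \<subseteq> insert x (set r)" by (rule set_update_subset_insert)
    moreover have "r!k \<in> set r" using kl by simp
    ultimately show ?thesis using "2.IH"[OF k_def False] False
      by (auto simp: Let_def k_def[symmetric])
  qed
qed

lemma schensted_snoc: "schensted_P (w @ [x]) = row_insert x (schensted_P w)"
  by (simp add: schensted_P_def)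

lemma schensted_ok: "fc_ok (schensted_P w) \<and> set (concat (schensted_P w)) \<subseteq> set w"
proof (induction w rule: rev_induct)
  case Nil then show ?case by (simp add: schensted_P_def)
next
  case (snoc x w)
  then show ?case using row_insert_ok[of "schensted_P w" x] row_insert_set[of x "schensted_P w"]
    by (auto simp: schensted_snoc)
qed

lemma fc_mono: "fc_ok T \<Longrightarrow> r < r' \<Longrightarrow> r' < length T \<Longrightarrow> T!r!0 < T!r'!0"
proof (induction r' arbitrary: r)
  case 0 then show ?case by simp
next
  case (Suc r')
  have s: "T!r'!0 < T!(Suc r')!0" using Suc.prems unfolding fc_ok_def by auto
  show ?case
  proof (cases "r = r'")
    case True then show ?thesis using s by simp
  next
    case False then show ?thesis using Suc.IH[of r] Suc.prems s by simp
  qed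
qed

lemma rows_le_card: "length (schensted_P w) \<le> card (set w)"
proof -
  let ?T = "schensted_P w"
  have ok: "fc_ok ?T" and sub: "set (concat ?T) \<subseteq> set w" using schensted_ok by auto
  have inj: "inj_on (\<lambda>r. ?T!r!0) {..<length ?T}"
  proof (rule inj_onI)
    fix r r' assume a: "r \<in> {..<length ?T}" "r' \<in> {..<length ?T}" "?T!r!0 = ?T!r'!0"
    show "r = r'"
    proof (rule ccontr)
      assume "r \<noteq> r'"
      then have "r < r' \<or> r' < r" by auto
      then show False using fc_mono[OF ok, of r r'] fc_mono[OF ok, of r' r] a by auto
    qed
  qed
  have "(\<lambda>r. ?T!r!0) ` {..<length ?T} \<subseteq> set w"
  proof
    fix y assume "y \<in> (\<lambda>r. ?T!r!0) ` {..<length ?T}"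
    then obtain r where r: "r < length ?T" "y = ?T!r!0" by auto
    have "?T!r \<noteq> []" using ok r(1) unfolding fc_ok_def by auto
    then have "y \<in> set (?T!r)" using r(2) by simp
    moreover have "set (?T!r) \<subseteq> set (concat ?T)" using r(1) by (auto intro!: bexI[of _ "?T!r"])
    ultimately show "y \<in> set w" using sub by auto
  qed
  then have "card ((\<lambda>r. ?T!r!0) ` {..<length ?T}) \<le> card (set w)" by (simp add: card_mono)
  then show ?thesis using card_image[OF inj] by simp
qed


definition hgt :: "nat list \<Rightarrow> nat \<Rightarrow> nat" where "hgt l c = length (filter (\<lambda>x. c < x) l)"
definition BT :: "nat \<Rightarrow> nat list \<Rightarrow> nat list list" where
  "BT N l = map (\<lambda>r. map (\<lambda>c. N + 1 + r - hgt l c) [0..<l!r]) [0..<length l]"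
definition ext :: "nat list \<Rightarrow> nat \<Rightarrow> nat" where "ext l j = (if j < length l then l!j else 0)"
definition inc :: "nat list \<Rightarrow> nat \<Rightarrow> nat list" where
  "inc l r0 = (if r0 < length l then l[r0 := Suc (l!r0)] else l @ [1])"

lemma tw_len: "r < length (takeWhile P xs) \<longleftrightarrow> r < length xs \<and> (\<forall>j\<le>r. P (xs!j))"
proof (induction xs arbitrary: r)
  case Nil then show ?case by simp
next
  case (Cons a xs)
  show ?case
  proof (cases r)
    case 0 then show ?thesis by auto
  next
    case (Suc r')
    have "(\<forall>j\<le>Suc r'. P ((a#xs)!j)) \<longleftrightarrow> P a \<and> (\<forall>j\<le>r'. P (xs!j))"
    proof
      assume h: "\<forall>j\<le>Suc r'. P ((a#xs)!j)"
      have "P ((a#xs)!0)" using h by blast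
      moreover have "\<forall>j\<le>r'. P (xs!j)"
      proof (intro allI impI)
        fix j assume "j \<le> r'"
        then have "Suc j \<le> Suc r'" by simp
        then have "P ((a#xs)!(Suc j))" using h by blast
        then show "P (xs!j)" by simp
      qed
      ultimately show "P a \<and> (\<forall>j\<le>r'. P (xs!j))" by simp
    next
      assume h: "P a \<and> (\<forall>j\<le>r'. P (xs!j))"
      show "\<forall>j\<le>Suc r'. P ((a#xs)!j)"
      proof (intro allI impI)
        fix j assume j: "j \<le> Suc r'"
        show "P ((a#xs)!j)"
        proof (cases j)
          case 0 then show ?thesis using h by simp
        next
          case (Suc j') then show ?thesis using h j by simp
        qed
      qed
    qed
    then show ?thesis using Cons.IH[of r'] Suc by auto
  qed
qed

lemma filter_dec: "sorted_wrt (\<ge>) (l::nat list) \<Longrightarrow> filter (\<lambda>x. c < x) l = takeWhile (\<lambda>x. c < x) l"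
proof (induction l)
  case Nil then show ?case by simp
next
  case (Cons a l)
  show ?case
  proof (cases "c < a")
    case True then show ?thesis using Cons by simp
  next
    case False
    have "\<forall>y\<in>set l. y \<le> a" using Cons.prems by simp
    have "\<forall>y\<in>set l. \<not> c < y"
    proof
      fix y assume "y \<in> set l"
      then have "y \<le> a" using \<open>\<forall>y\<in>set l. y \<le> a\<close> by simp
      then show "\<not> c < y" using False by simp
    qed
    then have "filter (\<lambda>x. c < x) l = []" by (simp add: filter_empty_conv)
    then show ?thesis using False by simp
  qed
qed

lemma hgt_lt: assumes "sorted_wrt (\<ge>) l" shows "r < hgt l c \<longleftrightarrow> c < ext l r"
proof -
  have "r < hgt l c \<longleftrightarrow> r < length l \<and> (\<forall>j\<le>r. c < l!j)"
    unfolding hgt_def filter_dec[OF assms] by (rule tw_len)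
  also have "\<dots> \<longleftrightarrow> c < ext l r"
  proof
    assume "c < ext l r"
    then have r: "r < length l" "c < l!r" unfolding ext_def by (auto split: if_splits)
    have "\<forall>j\<le>r. c < l!j"
    proof (intro allI impI)
      fix j assume "j \<le> r"
      then have "l!r \<le> l!j" using assms r(1) unfolding sorted_wrt_iff_nth_less
        by (cases "j = r") auto
      then show "c < l!j" using r by simp
    qed
    then show "r < length l \<and> (\<forall>j\<le>r. c < l!j)" using r by simp
  qed (auto simp: ext_def)
  finally show ?thesis .
qed

lemma hgt_le: "hgt l c \<le> length l"
  unfolding hgt_def by simp

lemma hgt_eq: assumes "sorted_wrt (\<ge>) l" "r0 \<le> length l" "r0 = 0 \<or> ext l r0 < l!(r0-1)"
  shows "hgt l (ext l r0) = r0"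
proof -
  have "\<forall>r. r < hgt l (ext l r0) \<longleftrightarrow> r < r0"
  proof
    fix r
    have "r < hgt l (ext l r0) \<longleftrightarrow> ext l r0 < ext l r" by (rule hgt_lt[OF assms(1)])
    also have "\<dots> \<longleftrightarrow> r < r0"
    proof
      assume a: "ext l r0 < ext l r"
      show "r < r0"
      proof (rule ccontr)
        assume "\<not> r < r0"
        then have "r0 \<le> r" by simp
        moreover have "r < length l" using a unfolding ext_def by (auto split: if_splits)
        ultimately have "ext l r \<le> ext l r0" using assms(1) unfolding ext_def sorted_wrt_iff_nth_less
          by (cases "r0 = r") auto
        then show False using a by simp
      qed
    next
      assume a: "r < r0"
      then have r0p: "r0 \<noteq> 0" and lt: "ext l r0 < l!(r0-1)" using assms(3) by auto
      have "r0 - 1 < length l" using a assms(2) by simp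
      then have "l!(r0-1) \<le> l!r" using a assms(1) unfolding sorted_wrt_iff_nth_less
        by (cases "r = r0 - 1") auto
      moreover have "r < length l" using a assms(2) by simp
      ultimately show "ext l r0 < ext l r" using lt unfolding ext_def by simp
    qed
    finally show "r < hgt l (ext l r0) \<longleftrightarrow> r < r0" .
  qed
  then show ?thesis by (metis less_irrefl nat_neq_iff)
qed

lemma hgt_inc: assumes "r0 \<le> length l"
  shows "hgt (inc l r0) c = hgt l c + (if c = ext l r0 then 1 else 0)"
proof (cases "r0 < length l")
  case True
  have l: "l = take r0 l @ l!r0 # drop (Suc r0) l" using True by (simp add: id_take_nth_drop)
  have l': "l[r0 := Suc (l!r0)] = take r0 l @ Suc (l!r0) # drop (Suc r0) l" using True by (simp add: upd_conv_take_nth_drop)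
  have "hgt l c = length (filter (\<lambda>x. c < x) (take r0 l)) + (if c < l!r0 then 1 else 0) + length (filter (\<lambda>x. c < x) (drop (Suc r0) l))"
    unfolding hgt_def by (subst l) simp
  moreover have "hgt (inc l r0) c = length (filter (\<lambda>x. c < x) (take r0 l)) + (if c < Suc (l!r0) then 1 else 0) + length (filter (\<lambda>x. c < x) (drop (Suc r0) l))"
    unfolding hgt_def inc_def using True by (simp add: l')
  ultimately show ?thesis using True by (auto simp: ext_def)
next
  case False
  then show ?thesis using assms by (auto simp: hgt_def inc_def ext_def)
qed

lemma length_inc: "r0 \<le> length l \<Longrightarrow> length (inc l r0) = (if r0 < length l then length l else Suc (length l))"
  by (auto simp: inc_def)

lemma inc_nth: "r0 \<le> length l \<Longrightarrow> j < length (inc l r0) \<Longrightarrow> inc l r0 ! j = (if j = r0 then Suc (ext l r0) else l!j)"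
  by (auto simp: inc_def ext_def nth_append)

lemma ext_inc: "r0 \<le> length l \<Longrightarrow> ext (inc l r0) j = ext l j + (if j = r0 then 1 else 0)"
  by (auto simp: inc_def ext_def nth_append)

lemma BT_len[simp]: "length (BT N l) = length l" by (simp add: BT_def)

lemma BT_nth: "r < length l \<Longrightarrow> BT N l ! r = map (\<lambda>c. N + 1 + r - hgt l c) [0..<l!r]"
  by (simp add: BT_def)

lemma tw_map:
  assumes "m \<le> n" "\<And>c. c < n \<Longrightarrow> P (f c) \<longleftrightarrow> c < m"
  shows "length (takeWhile P (map f [0..<n])) = m"
proof -
  have "[0..<n] = [0..<m] @ [m..<n]" using assms(1) by (metis le_add_diff_inverse upt_add_eq_append zero_le)
  then have e: "map f [0..<n] = map f [0..<m] @ map f [m..<n]" by simp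
  have "takeWhile P (map f [0..<n]) = map f [0..<m] @ takeWhile P (map f [m..<n])"
    unfolding e using assms by (intro takeWhile_append2) auto
  moreover have "takeWhile P (map f [m..<n]) = []"
  proof (cases "m < n")
    case True
    then have "map f [m..<n] = f m # map f [Suc m..<n]" by (simp add: upt_conv_Cons)
    then show ?thesis using assms(2)[of m] True by simp
  next
    case False then show ?thesis by simp
  qed
  ultimately show ?thesis by simp
qed

lemma drop_BT: "r < length l \<Longrightarrow> drop r (BT N l) = BT N l ! r # drop (Suc r) (BT N l)"
  by (simp add: Cons_nth_drop_Suc)

lemma BT_ins:
  assumes dec: "sorted_wrt (\<ge>) l" and pos: "\<forall>y\<in>set l. 0 < y" and lenN: "length l \<le> N"
    and x: "1 \<le> x" "x \<le> N" and r0: "r0 = N - x" "r0 \<le> length l"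
    and cond: "r0 = 0 \<or> ext l r0 < l!(r0-1)"
  shows "row_insert x (BT N l) = BT N (inc l r0)"
proof -
  let ?l' = "inc l r0"
  let ?e = "ext l r0"
  have hg: "\<And>c. hgt ?l' c = hgt l c + (if c = ?e then 1 else 0)" by (rule hgt_inc[OF r0(2)])
  have he: "hgt l ?e = r0" by (rule hgt_eq[OF dec r0(2) cond])
  have len': "length ?l' = (if r0 < length l then length l else Suc (length l))" by (rule length_inc[OF r0(2)])
  have rows_same: "\<And>j. j < length l \<Longrightarrow> j \<noteq> r0 \<Longrightarrow> (\<forall>c < l!j. c \<noteq> ?e) \<Longrightarrow> BT N ?l' ! j = BT N l ! j"
  proof -
    fix j assume j: "j < length l" "j \<noteq> r0" "\<forall>c < l!j. c \<noteq> ?e"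
    have "?l' ! j = l ! j" using inc_nth[OF r0(2), of j] j len' by auto
    moreover have "j < length ?l'" using j len' by auto
    ultimately show "BT N ?l' ! j = BT N l ! j" using j by (simp add: BT_nth hg)
  qed
  have drop_same: "\<And>r. r0 < r \<Longrightarrow> drop r (BT N ?l') = drop r (BT N l)"
  proof (rule nth_equalityI)
    fix r assume r: "r0 < r"
    show "length (drop r (BT N ?l')) = length (drop r (BT N l))" using len' r by auto
    fix i assume i: "i < length (drop r (BT N ?l'))"
    have jl: "r + i < length l" using i len' r by (auto split: if_splits)
    have "\<forall>c < l!(r+i). c \<noteq> ?e"
    proof (intro allI impI)
      fix c assume c: "c < l!(r+i)"
      have "r0 < length l" using r jl by simp
      then have "l!(r+i) \<le> l!r0" using dec r jl unfolding sorted_wrt_iff_nth_less by auto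
      then show "c \<noteq> ?e" using c \<open>r0 < length l\<close> unfolding ext_def by simp
    qed
    then show "drop r (BT N ?l') ! i = drop r (BT N l) ! i" using rows_same[of "r+i"] jl r i by simp
  qed
  have gen: "\<And>d r. r + d = r0 \<Longrightarrow> row_insert (x + r) (drop r (BT N l)) = drop r (BT N ?l')"
  proof -
    fix d
    show "\<And>r. r + d = r0 \<Longrightarrow> row_insert (x + r) (drop r (BT N l)) = drop r (BT N ?l')"
    proof (induction d)
      case 0
      then have rr: "r = r0" by simp
      have xr: "x + r0 = N" using r0 x by simp
      show ?case
      proof (cases "r0 < length l")
        case False
        then have r0l: "r0 = length l" using r0 by simp
        have "drop r0 (BT N l) = []" using r0l by simp
        moreover have "?l' = l @ [1]" using r0l by (simp add: inc_def)
        moreover have "hgt (l @ [1]) 0 = Suc (length l)"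
        proof -
          have "filter (\<lambda>y. 0 < y) l = l" using pos by (simp add: filter_id_conv)
          then show ?thesis by (simp add: hgt_def)
        qed
        ultimately show ?thesis using rr xr r0l by (simp add: BT_def)
      next
        case True
        have rowle: "\<forall>y\<in>set (BT N l ! r0). y \<le> N"
        proof
          fix y assume "y \<in> set (BT N l ! r0)"
          then obtain c where c: "c < l!r0" "y = N + 1 + r0 - hgt l c" using True by (auto simp: BT_nth)
          have "r0 < hgt l c" using hgt_lt[OF dec, of r0 c] c True by (simp add: ext_def)
          then show "y \<le> N" using c by simp
        qed
        have tw: "length (takeWhile (\<lambda>y. y \<le> N) (BT N l ! r0)) = length (BT N l ! r0)"
          using rowle by (simp add: takeWhile_eq_all_conv[THEN iffD2])
        have lhs: "row_insert N (drop r0 (BT N l)) = ((BT N l ! r0) @ [N]) # drop (Suc r0) (BT N l)"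
          using True tw by (simp add: drop_BT Let_def)
        have l'r0: "?l' ! r0 = Suc (l!r0)" using True by (simp add: inc_def)
        have newrow: "BT N ?l' ! r0 = (BT N l ! r0) @ [N]"
        proof -
          have "BT N ?l' ! r0 = map (\<lambda>c. N + 1 + r0 - hgt ?l' c) [0..<Suc (l!r0)]"
            using True len' l'r0 by (simp add: BT_nth)
          also have "\<dots> = map (\<lambda>c. N + 1 + r0 - hgt ?l' c) [0..<l!r0] @ [N + 1 + r0 - hgt ?l' (l!r0)]" by simp
          also have "map (\<lambda>c. N + 1 + r0 - hgt ?l' c) [0..<l!r0] = BT N l ! r0"
            using True by (auto simp: BT_nth hg ext_def)
          also have "N + 1 + r0 - hgt ?l' (l!r0) = N" using hg[of "l!r0"] he True by (simp add: ext_def)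
          finally show ?thesis .
        qed
        have "drop r0 (BT N ?l') = BT N ?l' ! r0 # drop (Suc r0) (BT N ?l')"
          using True len' by (intro Cons_nth_drop_Suc[symmetric]) simp
        then show ?thesis using lhs newrow drop_same[of "Suc r0"] rr xr by simp
      qed
    next
      case (Suc d)
      then have rlt: "r < r0" by simp
      have rl: "r < length l" using rlt r0 by simp
      have r0p: "r0 \<noteq> 0" using rlt by simp
      have elt: "?e < l!(r0-1)" using cond r0p by simp
      have "l!(r0-1) \<le> l!r" using dec rlt r0 unfolding sorted_wrt_iff_nth_less
        by (cases "r = r0 - 1") auto
      then have elr: "?e < l!r" using elt by simp
      let ?row = "BT N l ! r"
      have rowdef: "?row = map (\<lambda>c. N + 1 + r - hgt l c) [0..<l!r]" using rl by (rule BT_nth)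
      have k: "length (takeWhile (\<lambda>y. y \<le> x + r) ?row) = ?e"
        unfolding rowdef
      proof (rule tw_map)
        show "?e \<le> l!r" using elr by simp
        fix c assume "c < l!r"
        have hN: "hgt l c \<le> N" using hgt_le[of l c] lenN by simp
        have "N + 1 + r - hgt l c \<le> x + r \<longleftrightarrow> r0 < hgt l c" using hN r0 x by auto
        also have "\<dots> \<longleftrightarrow> c < ?e" by (rule hgt_lt[OF dec])
        finally show "N + 1 + r - hgt l c \<le> x + r \<longleftrightarrow> c < ?e" .
      qed
      have klen: "?e \<noteq> length ?row" using elr rowdef by simp
      have bump: "?row ! ?e = x + Suc r" using rowdef elr he r0 x by simp
      have lhs: "row_insert (x + r) (drop r (BT N l)) = (?row[?e := x + r]) # row_insert (x + Suc r) (drop (Suc r) (BT N l))"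
        using rl k klen bump by (simp add: drop_BT Let_def)
      have IH: "row_insert (x + Suc r) (drop (Suc r) (BT N l)) = drop (Suc r) (BT N ?l')"
        using Suc.IH[of "Suc r"] Suc.prems by simp
      have rl': "r < length ?l'" using rl len' by auto
      have l'r: "?l' ! r = l!r" using inc_nth[OF r0(2) rl'] rlt by simp
      have newrow: "BT N ?l' ! r = ?row[?e := x + r]"
      proof (rule nth_equalityI)
        show "length (BT N ?l' ! r) = length (?row[?e := x + r])" using rl' l'r rowdef by (simp add: BT_nth)
        fix c assume "c < length (BT N ?l' ! r)"
        then have c: "c < l!r" using rl' l'r by (simp add: BT_nth)
        show "BT N ?l' ! r ! c = ?row[?e := x + r] ! c"
        proof (cases "c = ?e")
          case True
          then show ?thesis using rl' l'r rowdef c hg[of c] he r0 x by (simp add: BT_nth nth_list_update)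
        next
          case False
          then show ?thesis using rl' l'r rowdef c hg[of c] by (simp add: BT_nth nth_list_update)
        qed
      qed
      have "drop r (BT N ?l') = BT N ?l' ! r # drop (Suc r) (BT N ?l')"
        using rl' by (intro Cons_nth_drop_Suc[symmetric]) simp
      then show ?case using lhs IH newrow by simp
    qed
  qed
  show ?thesis using gen[of 0 r0] by simp
qed


lemma sorted_inc:
  assumes dec: "sorted_wrt (\<ge>) l" and pos: "\<forall>y\<in>set l. 0 < y" and r0: "r0 \<le> length l"
    and cond: "r0 = 0 \<or> ext l r0 < l!(r0-1)"
  shows "sorted_wrt (\<ge>) (inc l r0)"
proof (cases "r0 < length l")
  case False
  then show ?thesis using dec pos by (simp add: inc_def sorted_wrt_append) (meson Suc_leI)
next
  case True
  show ?thesis unfolding sorted_wrt_iff_nth_less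
  proof (intro allI impI)
    fix i j assume ij: "i < j" "j < length (inc l r0)"
    then have jl: "j < length l" using True by (simp add: inc_def)
    have s: "l!j \<le> l!i" using dec ij jl unfolding sorted_wrt_iff_nth_less by auto
    show "inc l r0 ! j \<le> inc l r0 ! i"
    proof (cases "i = r0")
      case True then show ?thesis using s ij jl \<open>r0 < length l\<close> by (simp add: inc_def)
    next
      case False
      show ?thesis
      proof (cases "j = r0")
        case True
        then have "r0 \<noteq> 0" using ij by simp
        then have "l!r0 < l!(r0-1)" using cond \<open>r0 < length l\<close> by (simp add: ext_def)
        moreover have "l!(r0-1) \<le> l!i"
        proof (cases "i = r0 - 1")
          case True then show ?thesis by simp
        next
          case False
          then have "i < r0 - 1" "r0 - 1 < length l" using ij \<open>j = r0\<close> \<open>r0 < length l\<close> by auto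
          then show ?thesis using dec unfolding sorted_wrt_iff_nth_less by blast
        qed
        ultimately show ?thesis using True False \<open>r0 < length l\<close> by (simp add: inc_def)
      next
        case False then show ?thesis using s \<open>i \<noteq> r0\<close> \<open>r0 < length l\<close> by (simp add: inc_def)
      qed
    qed
  qed
qed

lemma L_shape:
  assumes "word L" "\<forall>x\<in>set L. x \<le> N"
    and ballot: "\<forall>i t. 1 \<le> i \<longrightarrow> i < N \<longrightarrow> t \<le> length L \<longrightarrow> count_list (take t L) i \<le> count_list (take t L) (Suc i)"
  shows "\<exists>l. schensted_P L = BT N l \<and> sorted_wrt (\<ge>) l \<and> (\<forall>y\<in>set l. 0 < y) \<and> length l \<le> N \<and>
           (\<forall>r<N. count_list L (N - r) = ext l r)"
  using assms
proof (induction L rule: rev_induct)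
  case Nil
  show ?case by (intro exI[of _ "[]"]) (simp add: schensted_P_def BT_def ext_def)
next
  case (snoc x q)
  have wq: "word q" using snoc.prems(1) by (simp add: word_def)
  have bq: "\<forall>i t. 1 \<le> i \<longrightarrow> i < N \<longrightarrow> t \<le> length q \<longrightarrow> count_list (take t q) i \<le> count_list (take t q) (Suc i)"
  proof (intro allI impI)
    fix i t assume a: "1 \<le> i" "i < N" "t \<le> length q"
    have "t \<le> length (q@[x])" using a by simp
    with snoc.prems(3) a(1,2) have "count_list (take t (q@[x])) i \<le> count_list (take t (q@[x])) (Suc i)" by blast
    then show "count_list (take t q) i \<le> count_list (take t q) (Suc i)" using a(3) by simp
  qed
  obtain l where l: "schensted_P q = BT N l" "sorted_wrt (\<ge>) l" "\<forall>y\<in>set l. 0 < y" "length l \<le> N"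
      "\<forall>r<N. count_list q (N - r) = ext l r"
    using snoc.IH[OF wq _ bq] snoc.prems(2) by auto
  have x1: "1 \<le> x" using snoc.prems(1) by (simp add: word_def)
  have xN: "x \<le> N" using snoc.prems(2) by simp
  define r0 where "r0 = N - x"
  have r0N: "r0 < N" using x1 xN unfolding r0_def by simp
  have er0: "ext l r0 = count_list q x" using l(5) r0N xN unfolding r0_def by auto
  have cond: "r0 \<le> length l \<and> (r0 = 0 \<or> ext l r0 < l!(r0-1))"
  proof (cases "r0 = 0")
    case True then show ?thesis by simp
  next
    case False
    then have xlt: "x < N" unfolding r0_def using xN by simp
    have "count_list (take (length (q@[x])) (q@[x])) x \<le> count_list (take (length (q@[x])) (q@[x])) (Suc x)"
      using snoc.prems(3) x1 xlt by blast
    then have c: "count_list q x < count_list q (Suc x)" by simp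
    have e1: "N - (r0 - 1) = Suc x" using False xlt unfolding r0_def by simp
    have "r0 - 1 < N" using r0N by simp
    then have "count_list q (N - (r0 - 1)) = ext l (r0 - 1)" using l(5) by blast
    then have "ext l (r0 - 1) = count_list q (Suc x)" using e1 by simp
    then have "ext l r0 < ext l (r0 - 1)" using c er0 by simp
    then have "r0 - 1 < length l" "ext l r0 < l!(r0-1)" unfolding ext_def by (auto split: if_splits)
    then show ?thesis using False by simp
  qed
  let ?l' = "inc l r0"
  have ins: "schensted_P (q@[x]) = BT N ?l'"
    using BT_ins[OF l(2,3,4) x1 xN r0_def] cond l(1) by (simp add: schensted_snoc)
  have s': "sorted_wrt (\<ge>) ?l'" using sorted_inc[OF l(2,3)] cond by simp
  have p': "\<forall>y\<in>set ?l'. 0 < y" using l(3) cond by (auto simp: inc_def dest: set_update_subset_insert[THEN subsetD])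
  have len': "length ?l' \<le> N" using cond l(4) r0N by (auto simp: inc_def)
  have c': "\<forall>r<N. count_list (q@[x]) (N - r) = ext ?l' r"
  proof (intro allI impI)
    fix r assume r: "r < N"
    have "(x = N - r) \<longleftrightarrow> (r = r0)" using r x1 xN unfolding r0_def by auto
    then show "count_list (q@[x]) (N - r) = ext ?l' r" using l(5) r ext_inc[of r0 l r] cond by auto
  qed
  show ?case using ins s' p' len' c' by blast
qed


definition G :: "nat list \<Rightarrow> nat list \<Rightarrow> nat list" where
  "G u ls = map (\<lambda>g. sum_list (map (count_list u) g)) (qr_groups u ls)"

lemma qr_groups_ne: "ls \<noteq> [] \<Longrightarrow> qr_groups u ls \<noteq> []"
  by (induction u ls rule: qr_groups.induct) (auto simp: Let_def)

lemma G_Nil[simp]: "G u [] = []" by (simp add: G_def)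
lemma G_single[simp]: "G u [a] = [count_list u a]" by (simp add: G_def)
lemma G_ne: "ls \<noteq> [] \<Longrightarrow> G u ls \<noteq> []" by (simp add: G_def qr_groups_ne)

lemma G_Cons2: "G u (a # b # rest) = (let g = G u (b # rest) in
   if has_subseq2 u b a then count_list u a # g else (count_list u a + hd g) # tl g)"
proof -
  have ne: "qr_groups u (b # rest) \<noteq> []" by (simp add: qr_groups_ne)
  show ?thesis using ne unfolding G_def by (cases "qr_groups u (b # rest)") (auto simp: Let_def)
qed

lemma qr_shape_G: "qr_shape u = G u (sorted_list_of_set (set u))"
proof -
  have "\<And>g. length (concat (map (\<lambda>a. replicate (count_list u a) a) g)) = sum_list (map (count_list u) g)"
    subgoal for g by (induction g) auto done
  then show ?thesis unfolding qr_shape_def qr_tableau_def G_def by (simp add: comp_def)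
qed

lemma hs_map_inj:
  assumes "inj_on s (set u)" "a \<in> set u" "b \<in> set u"
  shows "has_subseq2 (map s u) (s b) (s a) = has_subseq2 u b a"
proof -
  have eq: "\<And>p y. p < length u \<Longrightarrow> y \<in> set u \<Longrightarrow> (s (u!p) = s y) = (u!p = y)"
    using assms(1) by (meson inj_on_eq_iff nth_mem)
  show ?thesis unfolding has_subseq2_def
  proof
    assume "\<exists>p q. p < q \<and> q < length (map s u) \<and> map s u ! p = s b \<and> map s u ! q = s a"
    then obtain p q where pq: "p < q" "q < length u" "s (u!p) = s b" "s (u!q) = s a" by auto
    then have "u!p = b" "u!q = a" using eq[of p b] eq[of q a] assms(2,3) by auto
    then show "\<exists>p q. p < q \<and> q < length u \<and> u ! p = b \<and> u ! q = a" using pq by blast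
  next
    assume "\<exists>p q. p < q \<and> q < length u \<and> u ! p = b \<and> u ! q = a"
    then obtain p q where pq: "p < q" "q < length u" "u ! p = b" "u ! q = a" by blast
    then show "\<exists>p q. p < q \<and> q < length (map s u) \<and> map s u ! p = s b \<and> map s u ! q = s a"
      by (intro exI[of _ p] exI[of _ q]) simp
  qed
qed

lemma G_map:
  assumes "inj_on s (set u)" "set ls \<subseteq> set u"
  shows "G (map s u) (map s ls) = G u ls"
  using assms(2)
proof (induction ls rule: induct_list012)
  case 1 then show ?case by simp
next
  case (2 a)
  then have au: "a \<in> set u" by simp
  then show ?case using count_list_inj_map[OF assms(1) au] by simp
next
  case (3 a b rest)
  have IH: "G (map s u) (map s (b # rest)) = G u (b # rest)" using 3 by simp
  have c: "count_list (map s u) (s a) = count_list u a" using count_list_inj_map[OF assms(1)] 3 by simp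
  have h: "has_subseq2 (map s u) (s b) (s a) = has_subseq2 u b a" using hs_map_inj[OF assms(1)] 3 by simp
  have e: "G (map s u) (map s (a # b # rest)) = (let g = G (map s u) (map s (b # rest)) in if has_subseq2 (map s u) (s b) (s a) then count_list (map s u) (s a) # g else (count_list (map s u) (s a) + hd g) # tl g)"
    by (simp add: G_Cons2)
  show ?case unfolding e IH c h by (simp add: G_Cons2 Let_def)
qed

lemma qr_shape_map:
  assumes "strict_mono_on (set u) s"
  shows "qr_shape (map s u) = qr_shape u"
proof -
  have inj: "inj_on s (set u)" using assms by (rule strict_mono_on_imp_inj_on)
  let ?ls = "sorted_list_of_set (set u)"
  have sl: "set ?ls = set u" by simp
  have "sorted_wrt (<) ?ls" by simp
  then have "sorted_wrt (\<lambda>x y. s x < s y) ?ls"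
    by (rule sorted_wrt_mono_rel[rotated]) (use assms sl in \<open>auto simp: strict_mono_on_def\<close>)
  then have "sorted_wrt (<) (map s ?ls)" by (simp add: sorted_wrt_map)
  then have sd: "sorted (map s ?ls)" "distinct (map s ?ls)" by (auto simp: strict_sorted_iff)
  have "sorted_list_of_set (set (map s u)) = map s ?ls"
  proof -
    have "set (map s u) = set (map s ?ls)" by simp
    then show ?thesis using sorted_list_of_set.idem_if_sorted_distinct[OF sd] by simp
  qed
  then show ?thesis unfolding qr_shape_G using G_map[OF inj, of ?ls] by simp
qed


definition mg :: "nat \<Rightarrow> nat \<Rightarrow> nat" where "mg a x = (if x = Suc a then a else x)"

locale mrg =
  fixes u :: "nat list" and a :: nat
  assumes a_in: "a \<in> set u" and sa_in: "Suc a \<in> set u" and nosub: "\<not> has_subseq2 u (Suc a) a"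
begin

abbreviation "w \<equiv> map (mg a) u"

lemma w_nth: "p < length u \<Longrightarrow> w ! p = mg a (u!p)" by simp

lemma order_a: "p < length u \<Longrightarrow> q < length u \<Longrightarrow> u!p = Suc a \<Longrightarrow> u!q = a \<Longrightarrow> q < p"
  using nosub unfolding has_subseq2_def by (metis linorder_neqE_nat n_not_Suc_n)

lemma w_eq: "v \<notin> {a, Suc a} \<Longrightarrow> p < length u \<Longrightarrow> (w!p = v) = (u!p = v)"
  by (auto simp: mg_def)

lemma hs_other: assumes "y \<notin> {a, Suc a}" "z \<notin> {a, Suc a}" shows "has_subseq2 w y z = has_subseq2 u y z"
proof
  assume "has_subseq2 w y z"
  then obtain p q where pq: "p < q" "q < length u" "w!p = y" "w!q = z" unfolding has_subseq2_def by auto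
  then have "u!p = y" "u!q = z" using w_eq[OF assms(1), of p] w_eq[OF assms(2), of q] by auto
  then show "has_subseq2 u y z" using pq unfolding has_subseq2_def by blast
next
  assume "has_subseq2 u y z"
  then obtain p q where pq: "p < q" "q < length u" "u!p = y" "u!q = z" unfolding has_subseq2_def by auto
  then have "w!p = y" "w!q = z" using w_eq[OF assms(1), of p] w_eq[OF assms(2), of q] by auto
  then show "has_subseq2 w y z" using pq unfolding has_subseq2_def by (intro exI[of _ p] exI[of _ q]) simp
qed

lemma cnt_other: "z \<notin> {a, Suc a} \<Longrightarrow> count_list w z = count_list u z"
proof (induction u)
  case Nil then show ?case by simp
next
  case (Cons x xs) then show ?case by (auto simp: mg_def)
qed

lemma cnt_a_gen: "count_list (map (mg a) xs) a = count_list xs a + count_list xs (Suc a)"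
  by (induction xs) (auto simp: mg_def)

lemma cnt_a: "count_list w a = count_list u a + count_list u (Suc a)"
  by (rule cnt_a_gen)

lemma hs_a_low: assumes "z \<notin> {a, Suc a}" shows "has_subseq2 w a z = has_subseq2 u a z"
proof
  assume "has_subseq2 w a z"
  then obtain p q where pq: "p < q" "q < length u" "mg a (u!p) = a" "mg a (u!q) = z"
    unfolding has_subseq2_def by auto
  have uq: "u!q = z" using pq(4) assms unfolding mg_def by (auto split: if_splits)
  show "has_subseq2 u a z"
  proof (cases "u!p = a")
    case True then show ?thesis using pq uq unfolding has_subseq2_def by blast
  next
    case False
    then have up: "u!p = Suc a" using pq(3) unfolding mg_def by (auto split: if_splits)
    obtain r where r: "r < length u" "u!r = a" using a_in by (auto simp: in_set_conv_nth)
    have "r < p" using order_a[OF _ r(1) up r(2)] pq by simp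
    then show ?thesis using r pq uq unfolding has_subseq2_def by (intro exI[of _ r] exI[of _ q]) auto
  qed
next
  assume "has_subseq2 u a z"
  then obtain p q where pq: "p < q" "q < length u" "u!p = a" "u!q = z" unfolding has_subseq2_def by auto
  then show "has_subseq2 w a z" unfolding has_subseq2_def using assms
    by (intro exI[of _ p] exI[of _ q]) (auto simp: mg_def)
qed

lemma hs_hi_a: assumes "y \<notin> {a, Suc a}" shows "has_subseq2 w y a = has_subseq2 u y (Suc a)"
proof
  assume "has_subseq2 w y a"
  then obtain p q where pq: "p < q" "q < length u" "mg a (u!p) = y" "mg a (u!q) = a"
    unfolding has_subseq2_def by auto
  have up: "u!p = y" using pq(3) assms unfolding mg_def by (auto split: if_splits)
  show "has_subseq2 u y (Suc a)"
  proof (cases "u!q = Suc a")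
    case True then show ?thesis using pq up unfolding has_subseq2_def by blast
  next
    case False
    then have uq: "u!q = a" using pq(4) unfolding mg_def by (auto split: if_splits)
    obtain r where r: "r < length u" "u!r = Suc a" using sa_in by (auto simp: in_set_conv_nth)
    have "q < r" using order_a[OF r(1) _ r(2) uq] pq by simp
    then show ?thesis using r pq up unfolding has_subseq2_def by (intro exI[of _ p] exI[of _ r]) auto
  qed
next
  assume "has_subseq2 u y (Suc a)"
  then obtain p q where pq: "p < q" "q < length u" "u!p = y" "u!q = Suc a" unfolding has_subseq2_def by auto
  then show "has_subseq2 w y a" unfolding has_subseq2_def using assms
    by (intro exI[of _ p] exI[of _ q]) (auto simp: mg_def)
qed

lemma G_other: "\<forall>z\<in>set zs. z \<notin> {a, Suc a} \<Longrightarrow> G w zs = G u zs"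
proof (induction zs rule: induct_list012)
  case 1 then show ?case by simp
next
  case (2 x) then show ?case using cnt_other by simp
next
  case (3 x y zs)
  then show ?case using cnt_other[of x] hs_other[of y x] by (simp add: G_Cons2 Let_def)
qed

lemma merge_G:
  "\<forall>x\<in>set xs. x < a \<Longrightarrow> \<forall>y\<in>set ys. Suc a < y \<Longrightarrow> G w (xs @ a # ys) = G u (xs @ a # Suc a # ys)"
proof (induction xs)
  case Nil
  show ?case
  proof (cases ys)
    case Nil then show ?thesis using cnt_a by (simp add: G_Cons2 Let_def nosub)
  next
    case (Cons y ys')
    have yo: "y \<notin> {a, Suc a}" using Nil.prems Cons by auto
    have "\<forall>z\<in>set (y # ys'). z \<notin> {a, Suc a}" using Nil.prems Cons by auto
    then have g': "G w (y # ys') = G u (y # ys')" by (rule G_other)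
    have h: "has_subseq2 w y a = has_subseq2 u y (Suc a)" using hs_hi_a[OF yo] .
    have ne: "G u (y # ys') \<noteq> []" by (simp add: G_ne)
    show ?thesis using g' h cnt_a ne Cons by (simp add: G_Cons2 Let_def nosub)
  qed
next
  case (Cons x xs)
  have xo: "x \<notin> {a, Suc a}" using Cons.prems by auto
  have IH: "G w (xs @ a # ys) = G u (xs @ a # Suc a # ys)" using Cons by simp
  obtain z t1 t2 where z: "xs @ a # ys = z # t1" "xs @ a # Suc a # ys = z # t2" "z = a \<or> z \<in> set xs"
    by (cases xs) auto
  have hz: "has_subseq2 w z x = has_subseq2 u z x"
  proof (cases "z = a")
    case True then show ?thesis using hs_a_low[OF xo] by simp
  next
    case False
    then have "z \<in> set xs" using z(3) by simp
    then have "z \<notin> {a, Suc a}" using Cons.prems by auto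
    then show ?thesis using hs_other[OF _ xo] by simp
  qed
  have "G w (x # xs @ a # ys) = G w (x # z # t1)" using z by simp
  also have "\<dots> = G u (x # z # t2)"
    using IH z hz cnt_other[OF xo] by (simp add: G_Cons2 Let_def)
  also have "\<dots> = G u (x # xs @ a # Suc a # ys)" using z by simp
  finally show ?case by simp
qed

lemma qr_shape_merge: "qr_shape w = qr_shape u"
proof -
  let ?ls = "sorted_list_of_set (set u)"
  have sw: "sorted_wrt (<) ?ls" by simp
  have "a \<in> set ?ls" using a_in by simp
  then obtain xs zs where xz: "?ls = xs @ a # zs" by (meson split_list)
  have xs_lt: "\<forall>x\<in>set xs. x < a" and zs_gt: "\<forall>z\<in>set zs. a < z" and szs: "sorted_wrt (<) zs"
    using sw unfolding xz by (auto simp: sorted_wrt_append)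
  have "Suc a \<in> set zs" using sa_in xz xs_lt by (metis Un_iff empty_iff insert_iff lessI less_asym set_ConsD set_append set_sorted_list_of_set List.finite_set)
  then obtain z0 ys where zs: "zs = z0 # ys" by (cases zs) auto
  have "z0 = Suc a"
  proof (rule ccontr)
    assume ne: "z0 \<noteq> Suc a"
    then have "Suc a \<in> set ys" using \<open>Suc a \<in> set zs\<close> zs by simp
    then have "z0 < Suc a" using szs zs by simp
    moreover have "a < z0" using zs_gt zs by simp
    ultimately show False by simp
  qed
  then have ls: "?ls = xs @ a # Suc a # ys" using xz zs by simp
  have ys_gt: "\<forall>y\<in>set ys. Suc a < y" using szs zs \<open>z0 = Suc a\<close> by simp
  have "sorted_wrt (<) (xs @ a # ys)" using sw unfolding ls by (auto simp: sorted_wrt_append)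
  then have sd: "sorted (xs @ a # ys)" "distinct (xs @ a # ys)" by (auto simp: strict_sorted_iff)
  have setw: "set w = set (xs @ a # ys)"
  proof -
    have "set w = set u - {Suc a}"
      using a_in by (auto simp: mg_def split: if_splits)
    also have "set u = set (xs @ a # Suc a # ys)" by (metis ls set_sorted_list_of_set List.finite_set)
    finally show ?thesis using xs_lt ys_gt by auto
  qed
  have "sorted_list_of_set (set w) = xs @ a # ys"
    unfolding setw by (rule sorted_list_of_set.idem_if_sorted_distinct[OF sd])
  then show ?thesis unfolding qr_shape_G using merge_G[OF xs_lt ys_gt] ls by simp
qed

end


lemma le_last_filter_upt: "q \<in> set (filter P [0..<n]) \<Longrightarrow> q \<le> last (filter P [0..<n])"
proof (induction n)
  case 0 then show ?case by simp
next
  case (Suc n)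
  show ?case
  proof (cases "P n")
    case True then show ?thesis using Suc.prems by auto
  next
    case False then show ?thesis using Suc by auto
  qed
qed

lemma lc_filter: "[p. p \<leftarrow> xs, P p] = filter P xs"
  by (induction xs) auto

lemma quasi_pos:
  assumes "quasi_f i u = Some v"
  obtains p where "p < length u" "u!p = i" "\<forall>q. p < q \<and> q < length u \<longrightarrow> u!q \<noteq> i"
    "v = u[p := Suc i]" "\<not> has_subseq2 u (Suc i) i"
proof -
  have ns: "\<not> has_subseq2 u (Suc i) i" and iu: "i \<in> set u" using assms by (auto simp: quasi_f_def split: if_splits)
  let ?ps = "filter (\<lambda>q. u!q = i) [0..<length u]"
  have ne: "?ps \<noteq> []" using iu by (auto simp: filter_empty_conv in_set_conv_nth)
  define p where "p = last ?ps"
  have pin: "p \<in> set ?ps" unfolding p_def using ne by (rule last_in_set)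
  then have p1: "p < length u" "u!p = i" by auto
  have p2: "\<forall>q. p < q \<and> q < length u \<longrightarrow> u!q \<noteq> i"
  proof (intro allI impI)
    fix q assume q: "p < q \<and> q < length u"
    show "u!q \<noteq> i"
    proof
      assume "u!q = i"
      then have "q \<in> set ?ps" using q by simp
      then have "q \<le> p" unfolding p_def by (rule le_last_filter_upt)
      then show False using q by simp
    qed
  qed
  have "v = u[p := Suc i]" using assms ns iu unfolding quasi_f_def p_def by (simp add: lc_filter)
  then show ?thesis using that p1 p2 ns by blast
qed

lemma qr_quasi:
  assumes "quasi_f i u = Some v"
  shows "qr_shape v = qr_shape u"
proof -
  obtain p where p: "p < length u" "u!p = i" "\<forall>q. p < q \<and> q < length u \<longrightarrow> u!q \<noteq> i"
    "v = u[p := Suc i]" and ns: "\<not> has_subseq2 u (Suc i) i"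
    using quasi_pos[OF assms] by blast
  define sg where "sg x = (if i < x then Suc x else x)" for x
  have sgm: "strict_mono_on A sg" for A unfolding strict_mono_on_def sg_def by auto
  define u1 where "u1 = map sg u"
  have q1: "qr_shape u1 = qr_shape u" unfolding u1_def by (rule qr_shape_map[OF sgm])
  have sg_i: "sg x = i \<longleftrightarrow> x = i" for x unfolding sg_def by auto
  have sg_si: "sg x \<noteq> Suc i" for x unfolding sg_def by auto
  have len1: "length u1 = length u" unfolding u1_def by simp
  have u1p: "u1!p = i" using p unfolding u1_def sg_def by simp
  define u2 where "u2 = u1[p := Suc i]"
  have len2: "length u2 = length u" unfolding u2_def by (simp add: len1)
  have u2nth: "u2!q = (if q = p then Suc i else sg (u!q))" if "q < length u" for q
    using that p(1) unfolding u2_def u1_def by simp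
  have qA: "qr_shape u2 = qr_shape u1"
  proof (cases "\<exists>q<length u. q \<noteq> p \<and> u!q = i")
    case True
    then obtain q where q: "q < length u" "q \<noteq> p" "u!q = i" by blast
    interpret M: mrg u2 i
    proof
      show "i \<in> set u2" using q u2nth[of q] sg_i len2 by (metis in_set_conv_nth)
      show "Suc i \<in> set u2" using p(1) u2nth[of p] len2 by (metis in_set_conv_nth)
      show "\<not> has_subseq2 u2 (Suc i) i"
      proof
        assume "has_subseq2 u2 (Suc i) i"
        then obtain r r' where rr: "r < r'" "r' < length u" "u2!r = Suc i" "u2!r' = i"
          unfolding has_subseq2_def len2 by auto
        have "r = p" using rr u2nth[of r] sg_si by (auto split: if_splits)
        moreover have "r' \<noteq> p" "u!r' = i" using rr u2nth[of r'] sg_i by (auto split: if_splits)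
        ultimately show False using p(3) rr by auto
      qed
    qed
    have "map (mg i) u2 = u1"
    proof (rule nth_equalityI)
      show "length (map (mg i) u2) = length u1" by (simp add: len1 len2)
      fix q assume "q < length (map (mg i) u2)"
      then have q: "q < length u" by (simp add: len2)
      show "map (mg i) u2 ! q = u1 ! q"
        using q u2nth[of q] sg_si u1p len2 unfolding u1_def mg_def by (auto simp: len2)
    qed
    then show ?thesis using M.qr_shape_merge by simp
  next
    case False
    define rh where "rh x = (if x = i then Suc i else x)" for x
    have "u2 = map rh u1"
    proof (rule nth_equalityI)
      show "length u2 = length (map rh u1)" by (simp add: len1 len2)
      fix q assume "q < length u2"
      then have q: "q < length u" by (simp add: len2)
      show "u2 ! q = map rh u1 ! q"
      proof (cases "q = p")
        case True then show ?thesis using q u2nth[of q] u1p len1 by (simp add: rh_def)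
      next
        case False
        then have "u!q \<noteq> i" using \<open>\<not> (\<exists>q<length u. q \<noteq> p \<and> u!q = i)\<close> q by blast
        then show ?thesis using q u2nth[of q] False sg_i len1 unfolding u1_def rh_def by auto
      qed
    qed
    moreover have "strict_mono_on (set u1) rh"
    proof -
      have h: "Suc i \<notin> set u1" unfolding u1_def sg_def by auto
      show ?thesis
      proof (rule strict_mono_onI)
        fix x y assume xy: "x \<in> set u1" "y \<in> set u1" "x < y"
        then have "x \<noteq> Suc i" "y \<noteq> Suc i" using h by auto
        then show "rh x < rh y" using xy(3) unfolding rh_def by auto
      qed
    qed
    ultimately show ?thesis using qr_shape_map by simp
  qed
  define tt where "tt x = (if Suc (Suc i) < x then x - 1 else x)" for x
  have tt_mono: "strict_mono_on A tt" if hA: "Suc (Suc i) \<notin> A" for A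
  proof (rule strict_mono_onI)
    fix x y assume xy: "x \<in> A" "y \<in> A" "x < y"
    then have "x \<noteq> Suc (Suc i)" "y \<noteq> Suc (Suc i)" using hA by auto
    then show "tt x < tt y" using xy(3) unfolding tt_def by auto
  qed
  have qB: "qr_shape v = qr_shape u2"
  proof (cases "Suc i \<in> set u")
    case True
    interpret M: mrg u2 "Suc i"
    proof
      show "Suc i \<in> set u2" using p(1) u2nth[of p] len2 by (metis in_set_conv_nth)
      obtain r where r: "r < length u" "u!r = Suc i" using True by (auto simp: in_set_conv_nth)
      have "r \<noteq> p" using r p(2) by auto
      then show "Suc (Suc i) \<in> set u2" using r u2nth[of r] len2 unfolding sg_def by (metis lessI in_set_conv_nth)
      show "\<not> has_subseq2 u2 (Suc (Suc i)) (Suc i)"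
      proof
        assume "has_subseq2 u2 (Suc (Suc i)) (Suc i)"
        then obtain r r' where rr: "r < r'" "r' < length u" "u2!r = Suc (Suc i)" "u2!r' = Suc i"
          unfolding has_subseq2_def len2 by auto
        have "r' = p" using rr u2nth[of r'] sg_si by (auto split: if_splits)
        moreover have "r \<noteq> p" "u!r = Suc i" using rr u2nth[of r] unfolding sg_def by (auto split: if_splits)
        ultimately have "has_subseq2 u (Suc i) i" using rr p(2) unfolding has_subseq2_def by auto
        then show False using ns by simp
      qed
    qed
    let ?u3 = "map (mg (Suc i)) u2"
    have vv: "v = map tt ?u3"
    proof (rule nth_equalityI)
      show "length v = length (map tt ?u3)" using p(4) len2 by simp
      fix q assume "q < length v"
      then have q: "q < length u" using p(4) by simp
      show "v ! q = map tt ?u3 ! q"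
        using q u2nth[of q] len2 p(4) unfolding tt_def mg_def sg_def by (auto simp: nth_list_update)
    qed
    have mono: "strict_mono_on (set ?u3) tt"
    proof -
      have "Suc (Suc i) \<notin> set ?u3" unfolding mg_def by auto
      then show ?thesis by (rule tt_mono)
    qed
    have "qr_shape v = qr_shape ?u3" unfolding vv by (rule qr_shape_map[OF mono])
    then show ?thesis using M.qr_shape_merge by simp
  next
    case False
    have "v = map tt u2"
    proof (rule nth_equalityI)
      show "length v = length (map tt u2)" using p(4) len2 by simp
      fix q assume "q < length v"
      then have q: "q < length u" using p(4) by simp
      have "u!q \<noteq> Suc i" using False q by (metis nth_mem)
      then show "v ! q = map tt u2 ! q"
        using q u2nth[of q] len2 p(4) unfolding tt_def sg_def by (auto simp: nth_list_update)
    qed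
    moreover have "strict_mono_on (set u2) tt"
    proof -
      have "Suc (Suc i) \<notin> set u2"
      proof
        assume "Suc (Suc i) \<in> set u2"
        then obtain q where q: "q < length u" "u2!q = Suc (Suc i)" using len2 by (auto simp: in_set_conv_nth)
        then have "u!q = Suc i" using u2nth[of q] unfolding sg_def by (auto split: if_splits)
        then show False using False q by (metis nth_mem)
      qed
      then show ?thesis by (rule tt_mono)
    qed
    ultimately show ?thesis using qr_shape_map by simp
  qed
  show ?thesis using qB qA q1 by simp
qed


lemma perm_reach:
  assumes "b \<ge> 1"
  shows "length xs = length ys \<Longrightarrow> (\<forall>x. count_list xs x = count_list ys x) \<Longrightarrow> word u \<Longrightarrow> (w0,u) \<in> RR\<^sup>* \<Longrightarrow>
    st_ok u b xs c0 \<Longrightarrow> \<exists>u'. word u' \<and> (w0,u') \<in> RR\<^sup>* \<and> st_ok u' b ys c0"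
  using assms
proof (induction ys arbitrary: xs b u c0)
  case Nil
  then have "xs = []" by simp
  then show ?case using Nil.prems by (intro exI[of _ u]) simp
next
  case (Cons y ys)
  have "count_list xs y > 0" using Cons.prems(2) by simp
  then have "y \<in> set xs" using count_list_0_iff[of xs y] by simp
  then obtain m where m: "m < length xs" "xs!m = y" by (auto simp: in_set_conv_nth)
  obtain u1 where u1: "word u1" "(w0,u1) \<in> RR\<^sup>*" "st_ok u1 b (xs!m # take m xs @ drop (Suc m) xs) c0"
    using bubble[OF Cons.prems(6) m(1) Cons.prems(3,4,5)] by blast
  let ?xs' = "take m xs @ drop (Suc m) xs"
  have cnt: "\<And>x. count_list xs x = count_list ?xs' x + (if y = x then 1 else 0)"
  proof -
    fix x
    have e: "take m xs @ xs!m # drop (Suc m) xs = xs" using m(1) by (rule id_take_nth_drop[symmetric])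
    have "count_list (take m xs @ xs!m # drop (Suc m) xs) x = count_list ?xs' x + (if xs!m = x then 1 else 0)" by simp
    then show "count_list xs x = count_list ?xs' x + (if y = x then 1 else 0)" unfolding e using m(2) by simp
  qed
  have len': "length ?xs' = length ys" using Cons.prems(1) m(1) by simp
  have cnt': "\<forall>x. count_list ?xs' x = count_list ys x"
  proof
    fix x
    have "count_list xs x = count_list (y # ys) x" using Cons.prems(2) by blast
    then show "count_list ?xs' x = count_list ys x" using cnt[of x] by (auto split: if_splits)
  qed
  have AB: "(\<forall>j<length (xs!m # ?xs'). count_list u1 (b+j) = (xs!m # ?xs')!j) \<and>
     (\<forall>x. (x < b \<or> b + length (xs!m # ?xs') \<le> x) \<longrightarrow> count_list u1 x = c0 x)"
    using u1(3) unfolding st_ok_def .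
  note A = conjunct1[OF AB] and B = conjunct2[OF AB]
  have st': "st_ok u1 (Suc b) ?xs' (c0(b := y))"
    unfolding st_ok_def
  proof (intro conjI allI impI)
    fix j assume "j < length ?xs'"
    then have "Suc j < length (xs!m # ?xs')" by simp
    then have "count_list u1 (b + Suc j) = (xs!m # ?xs') ! Suc j" using A by blast
    then show "count_list u1 (Suc b + j) = ?xs' ! j" by simp
  next
    fix x assume x: "x < Suc b \<or> Suc b + length ?xs' \<le> x"
    show "count_list u1 x = (c0(b := y)) x"
    proof (cases "x = b")
      case True
      have "0 < length (xs!m # ?xs')" by simp
      then have "count_list u1 (b + 0) = (xs!m # ?xs') ! 0" using A by blast
      then show ?thesis using True m(2) by simp
    next
      case False
      then have "x < b \<or> b + length (xs!m # ?xs') \<le> x" using x by auto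
      then have "count_list u1 x = c0 x" using B by blast
      then show ?thesis using False by simp
    qed
  qed
  obtain u' where u': "word u'" "(w0,u') \<in> RR\<^sup>*" "st_ok u' (Suc b) ys (c0(b := y))"
  proof -
    have "\<exists>u'. word u' \<and> (w0,u') \<in> RR\<^sup>* \<and> st_ok u' (Suc b) ys (c0(b := y))"
      using Cons.IH[OF len' cnt' u1(1,2) st'] by (simp add: fun_upd_def)
    then show ?thesis using that by blast
  qed
  have "st_ok u' b (y # ys) c0"
    unfolding st_ok_def
  proof (intro conjI allI impI)
    fix j assume j: "j < length (y # ys)"
    show "count_list u' (b + j) = (y # ys) ! j"
    proof (cases j)
      case 0
      have "count_list u' b = (c0(b := y)) b" using u'(3) unfolding st_ok_def by simp
      then show ?thesis using 0 by simp
    next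
      case (Suc j')
      then have "count_list u' (Suc b + j') = ys ! j'" using u'(3) j unfolding st_ok_def by simp
      then show ?thesis using Suc by simp
    qed
  next
    fix x assume x: "x < b \<or> b + length (y # ys) \<le> x"
    then have xx: "x < Suc b \<or> Suc b + length ys \<le> x" "x \<noteq> b" by auto
    have "\<forall>x. (x < Suc b \<or> Suc b + length ys \<le> x) \<longrightarrow> count_list u' x = (c0(b := y)) x"
      using u'(3) unfolding st_ok_def by blast
    then have "count_list u' x = (c0(b := y)) x" using xx(1) by blast
    then show "count_list u' x = c0 x" using xx(2) by simp
  qed
  then show ?case using u' by blast
qed

lemma kas_some: "kashiwara_f i u = Some v \<Longrightarrow> \<exists>p<length u. u!p = i \<and> v = u[p := Suc i]"
proof -
  assume k: "kashiwara_f i u = Some v"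
  let ?ps = "filter (recp i u) [0..<length u]"
  have ne: "?ps \<noteq> []" and v: "v = u[last ?ps := Suc i]" using k by (auto simp: kashiwara_char Let_def split: if_splits)
  have "last ?ps \<in> set ?ps" using ne by (rule last_in_set)
  then have "recp i u (last ?ps)" by (simp only: set_filter) blast
  then show ?thesis using v unfolding recp_def by blast
qed

lemma sum_upd: "p < length u \<Longrightarrow> sum_list (map f (u[p := y])) + f (u!p) = sum_list (map f u) + (f y :: nat)"
proof (induction u arbitrary: p)
  case Nil then show ?case by simp
next
  case (Cons a u) then show ?case by (cases p) auto
qed

lemma reach_low:
  assumes "N \<ge> 1"
  shows "word u \<Longrightarrow> (\<forall>x\<in>set u. x \<le> N) \<Longrightarrow> (w0,u) \<in> RR\<^sup>* \<Longrightarrow>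
    \<exists>L. word L \<and> (\<forall>x\<in>set L. x \<le> N) \<and> (w0, L) \<in> RR\<^sup>* \<and> (\<forall>i. 1 \<le> i \<longrightarrow> i < N \<longrightarrow> kashiwara_f i L = None)"
proof (induction "sum_list (map (\<lambda>x. N - x) u)" arbitrary: u rule: less_induct)
  case less
  show ?case
  proof (cases "\<forall>i. 1 \<le> i \<longrightarrow> i < N \<longrightarrow> kashiwara_f i u = None")
    case True then show ?thesis using less.prems by blast
  next
    case False
    then obtain i v where iv: "1 \<le> i" "i < N" "kashiwara_f i u = Some v" by auto
    obtain p where p: "p < length u" "u!p = i" "v = u[p := Suc i]" using kas_some[OF iv(3)] by blast
    have wv: "word v" using p(3) less.prems(1) by (simp add: word_upd)
    have lv: "\<forall>x\<in>set v. x \<le> N" using p(3) less.prems(2) iv(2) set_update_subset_insert[of u p "Suc i"] by auto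
    have "(u, v) \<in> plac_edges" unfolding plac_edges_def using less.prems(1) iv by auto
    then have rv: "(w0, v) \<in> RR\<^sup>*" using less.prems(3) unfolding RR_def by (meson UnI1 rtrancl.rtrancl_into_rtrancl)
    have "sum_list (map (\<lambda>x. N - x) v) + (N - i) = sum_list (map (\<lambda>x. N - x) u) + (N - Suc i)"
      using sum_upd[OF p(1), of "\<lambda>x. N - x" "Suc i"] p by simp
    then have "sum_list (map (\<lambda>x. N - x) v) < sum_list (map (\<lambda>x. N - x) u)" using iv(2) by simp
    then show ?thesis using less.hyps wv lv rv by blast
  qed
qed

lemma merge_reach:
  assumes "i \<ge> 1"
  shows "word u \<Longrightarrow> (w0,u) \<in> RR\<^sup>* \<Longrightarrow> \<not> has_subseq2 u (Suc i) i \<Longrightarrow>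
    \<exists>u''. word u'' \<and> (w0,u'') \<in> RR\<^sup>* \<and> set u'' \<subseteq> (set u - {i}) \<union> {Suc i}"
proof (induction "count_list u i" arbitrary: u rule: less_induct)
  case less
  show ?case
  proof (cases "i \<in> set u")
    case False then show ?thesis using less.prems by blast
  next
    case True
    let ?v = "the (quasi_f i u)"
    have q: "quasi_f i u = Some ?v" using True less.prems(3) by (simp add: quasi_f_def)
    obtain p where p: "p < length u" "u!p = i" "\<forall>q. p < q \<and> q < length u \<longrightarrow> u!q \<noteq> i" "?v = u[p := Suc i]"
      using quasi_pos[OF q] by blast
    have "(u, ?v) \<in> plac_edges" unfolding plac_edges_def using less.prems(1) quasi_kashiwara[OF q] assms by auto
    then have rv: "(w0, ?v) \<in> RR\<^sup>*" using less.prems(2) unfolding RR_def by (meson UnI1 rtrancl.rtrancl_into_rtrancl)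
    have wv: "word ?v" using p(4) less.prems(1) by (simp add: word_upd)
    have cv: "count_list ?v i < count_list u i"
      using cnt_upd_self[OF p(1,2), of "Suc i"] p(4) by simp
    have nv: "\<not> has_subseq2 ?v (Suc i) i"
    proof
      assume "has_subseq2 ?v (Suc i) i"
      then obtain r r' where rr: "r < r'" "r' < length u" "?v!r = Suc i" "?v!r' = i"
        unfolding has_subseq2_def using p(4) by auto
      have r'p: "r' \<noteq> p"
      proof
        assume "r' = p"
        then have "?v!r' = Suc i" using p(1,4) by simp
        then show False using rr(4) by simp
      qed
      then have "u!r' = i" using rr(4) p(4) by simp
      note r' = r'p this
      have "r' < p"
      proof (rule ccontr)
        assume "\<not> r' < p"
        then have "p < r'" using r'p by simp
        then show False using p(3) rr(2) r'(2) by blast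
      qed
      show False
      proof (cases "r = p")
        case True then show False using rr \<open>r' < p\<close> by simp
      next
        case False
        then have "u!r = Suc i" using rr p(4) by (auto simp: nth_list_update)
        then show False using less.prems(3) rr r' unfolding has_subseq2_def by auto
      qed
    qed
    obtain u'' where u'': "word u''" "(w0,u'') \<in> RR\<^sup>*" "set u'' \<subseteq> (set ?v - {i}) \<union> {Suc i}"
      using less.hyps[OF cv wv rv nv] by blast
    have "set ?v \<subseteq> insert (Suc i) (set u)" using p(4) set_update_subset_insert by metis
    then show ?thesis using u'' by blast
  qed
qed


lemma G_upt: "(\<forall>j. Suc j < m \<longrightarrow> has_subseq2 u (c + Suc j) (c + j)) \<Longrightarrow>
   G u [c..<c+m] = map (\<lambda>j. count_list u (c+j)) [0..<m]"
proof (induction m arbitrary: c)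
  case 0 then show ?case by simp
next
  case (Suc m)
  show ?case
  proof (cases m)
    case 0 then show ?thesis by simp
  next
    case (Suc m')
    have e1: "[c..<c + Suc m] = c # Suc c # [Suc (Suc c)..<c + Suc m]" using Suc by (simp add: upt_conv_Cons)
    have e2: "[Suc c..<Suc c + m] = Suc c # [Suc (Suc c)..<c + Suc m]" using Suc by (simp add: upt_conv_Cons)
    have cut: "has_subseq2 u (Suc c) c" using Suc.prems Suc by (metis add.right_neutral add_Suc_right zero_less_Suc Suc_less_eq)
    have pre: "\<forall>j. Suc j < m \<longrightarrow> has_subseq2 u (Suc c + Suc j) (Suc c + j)"
    proof (intro allI impI)
      fix j assume "Suc j < m"
      then have "Suc (Suc j) < Suc m" by simp
      then have "has_subseq2 u (c + Suc (Suc j)) (c + Suc j)" using Suc.prems by blast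
      then show "has_subseq2 u (Suc c + Suc j) (Suc c + j)" by simp
    qed
    have IH: "G u [Suc c..<Suc c + m] = map (\<lambda>j. count_list u (Suc c + j)) [0..<m]"
      by (rule Suc.IH[of "Suc c", OF pre])
    have gen: "\<And>rest. G u (c # Suc c # rest) = count_list u c # G u (Suc c # rest)"
      using cut by (simp add: G_Cons2 Let_def)
    have "G u [c..<c + Suc m] = count_list u c # G u (Suc c # [Suc (Suc c)..<c + Suc m])"
      by (subst e1) (rule gen)
    also have "\<dots> = count_list u c # G u [Suc c..<Suc c + m]" by (simp only: e2)
    also have "\<dots> = map (\<lambda>j. count_list u (c+j)) [0..<Suc m]"
      unfolding IH by (simp add: map_upt_Suc del: upt_Suc)
    finally show ?thesis .
  qed
qed

lemma hypo_sub: "hypo_edges \<subseteq> plac_edges"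
  unfolding hypo_edges_def plac_edges_def using quasi_kashiwara by blast

lemma hypo_inv: "(u, w) \<in> (hypo_edges \<union> hypo_edges\<inverse>)\<^sup>* \<Longrightarrow> qr_shape w = qr_shape u"
proof (induction rule: rtrancl_induct)
  case base then show ?case by simp
next
  case (step y z)
  then show ?case unfolding hypo_edges_def using qr_quasi by auto
qed

lemma shape_BT: "tableau_shape (BT N l) = l"
  unfolding tableau_shape_def BT_def by (simp add: comp_def map_nth)

theorem theorem6p2:
  fixes \<alpha> :: "nat list" and C :: "nat list set"
  assumes "composition \<alpha>"
    and "C \<in> plac_components"
    and "\<forall>w\<in>C. tableau_shape (schensted_P w) = sort_partition \<alpha>"
  shows "\<exists>D\<in>hypo_components. D \<subseteq> C \<and> (\<forall>w\<in>D. qr_shape w = \<alpha>)"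
proof -
  obtain w0 where w0: "word w0" "C = component plac_edges w0"
    using assms(2) unfolding plac_components_def by blast
  have Cmem: "\<And>w. w \<in> C \<longleftrightarrow> (w0, w) \<in> RR\<^sup>*" unfolding w0 component_def RR_def by auto
  have shp: "\<And>w. (w0,w) \<in> RR\<^sup>* \<Longrightarrow> tableau_shape (schensted_P w) = rev (sort \<alpha>)"
    using assms(3) Cmem unfolding sort_partition_def by auto
  have apos: "\<forall>x\<in>set \<alpha>. 0 < x" using assms(1) unfolding composition_def .
  define N where "N = Suc (sum_list w0)"
  have N1: "N \<ge> 1" unfolding N_def by simp
  have w0N: "\<forall>x\<in>set w0. x \<le> N" unfolding N_def using member_le_sum_list by fastforce
  obtain L where L: "word L" "\<forall>x\<in>set L. x \<le> N" "(w0, L) \<in> RR\<^sup>*" "\<forall>i. 1 \<le> i \<longrightarrow> i < N \<longrightarrow> kashiwara_f i L = None"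
    using reach_low[OF N1 w0(1) w0N] by blast
  have ballot: "\<forall>i t. 1 \<le> i \<longrightarrow> i < N \<longrightarrow> t \<le> length L \<longrightarrow> count_list (take t L) i \<le> count_list (take t L) (Suc i)"
  proof (intro allI impI)
    fix i t assume a: "1 \<le> i" "i < N" "t \<le> length L"
    have "S i L t \<le> 0" using f_none_ballot[of i L t] L(4) a by simp
    then show "count_list (take t L) i \<le> count_list (take t L) (Suc i)" by (simp add: S_def)
  qed
  obtain l where l: "schensted_P L = BT N l" "sorted_wrt (\<ge>) l" "\<forall>y\<in>set l. 0 < y" "length l \<le> N"
      "\<forall>r<N. count_list L (N - r) = ext l r"
    using L_shape[OF L(1,2) ballot] by blast
  have leq: "l = rev (sort \<alpha>)" using shp[OF L(3)] l(1) shape_BT by simp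
  define k where "k = length \<alpha>"
  have lk: "length l = k" unfolding leq k_def by simp
  have kN: "k \<le> N" using l(4) lk by simp
  define b where "b = Suc N - k"
  have b1: "b \<ge> 1" unfolding b_def using kN by simp
  have stL: "st_ok L b (sort \<alpha>) (\<lambda>_. 0)"
    unfolding st_ok_def
  proof (intro conjI allI impI)
    fix j assume j: "j < length (sort \<alpha>)"
    then have jk: "j < k" unfolding k_def by simp
    have e: "b + j = N - (k - 1 - j)" unfolding b_def using jk kN by simp
    have "k - 1 - j < N" using jk kN by simp
    then have "count_list L (N - (k - 1 - j)) = ext l (k - 1 - j)" using l(5) by blast
    then have "count_list L (b + j) = ext l (k - 1 - j)" using e by simp
    also have "\<dots> = l ! (k - 1 - j)" unfolding ext_def using lk jk by simp
    also have "\<dots> = sort \<alpha> ! j" unfolding leq using jk k_def by (simp add: rev_nth)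
    finally show "count_list L (b + j) = sort \<alpha> ! j" .
  next
    fix x assume x: "x < b \<or> b + length (sort \<alpha>) \<le> x"
    show "count_list L x = 0"
    proof (cases "x = 0 \<or> N < x")
      case True
      then have "x \<notin> set L" using L(1,2) unfolding word_def by auto
      then show ?thesis by simp
    next
      case False
      then have x1: "1 \<le> x" "x \<le> N" by auto
      then have xb: "x < b" using x unfolding b_def k_def by auto
      define r where "r = N - x"
      have r: "r < N" "N - r = x" "k \<le> r" unfolding r_def using x1 xb kN unfolding b_def by auto
      have "count_list L x = ext l r" using l(5) r by metis
      also have "\<dots> = 0" unfolding ext_def using lk r by simp
      finally show ?thesis .
    qed
  qed
  have cnt_sort: "\<forall>x. count_list (sort \<alpha>) x = count_list \<alpha> x"
    by (simp add: count_mset[symmetric])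
  obtain u where u: "word u" "(w0, u) \<in> RR\<^sup>*" "st_ok u b \<alpha> (\<lambda>_. 0)"
    using perm_reach[OF b1 _ cnt_sort L(1,3) stL] by auto
  have ucnt: "\<And>j. j < k \<Longrightarrow> count_list u (b + j) = \<alpha> ! j" using u(3) unfolding st_ok_def k_def by blast
  have uout: "\<And>x. x < b \<or> b + k \<le> x \<Longrightarrow> count_list u x = 0" using u(3) unfolding st_ok_def k_def by blast
  have setu: "set u = {b..<b+k}"
  proof
    show "set u \<subseteq> {b..<b+k}"
    proof
      fix x assume "x \<in> set u"
      then have "count_list u x \<noteq> 0" by (simp add: count_list_0_iff)
      then have "\<not> (x < b \<or> b + k \<le> x)" using uout[of x] by metis
      then show "x \<in> {b..<b+k}" by simp
    qed
  next
    show "{b..<b+k} \<subseteq> set u"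
    proof
      fix x assume x: "x \<in> {b..<b+k}"
      then obtain j where j: "j < k" "x = b + j" by (metis atLeastLessThan_iff le_add_diff_inverse add_less_cancel_left)
      have "\<alpha> ! j > 0" using apos j(1) unfolding k_def by simp
      then have "count_list u x \<noteq> 0" using ucnt j by simp
      then show "x \<in> set u" by (metis count_notin)
    qed
  qed
  have cuts: "\<forall>j. Suc j < k \<longrightarrow> has_subseq2 u (b + Suc j) (b + j)"
  proof (intro allI impI)
    fix j assume j: "Suc j < k"
    show "has_subseq2 u (b + Suc j) (b + j)"
    proof (rule ccontr)
      assume ns: "\<not> has_subseq2 u (b + Suc j) (b + j)"
      have i1: "1 \<le> b + j" using b1 by simp
      obtain u'' where u'': "word u''" "(w0,u'') \<in> RR\<^sup>*" "set u'' \<subseteq> (set u - {b + j}) \<union> {Suc (b + j)}"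
        using merge_reach[OF i1 u(1,2)] ns by auto
      have "Suc (b + j) \<in> set u" using setu j by simp
      then have sub: "set u'' \<subseteq> {b..<b+k} - {b + j}" using u''(3) setu by auto
      have "card (set u'') \<le> card ({b..<b+k} - {b + j})" using sub by (simp add: card_mono)
      also have "\<dots> = k - 1" using j by simp
      finally have c1: "card (set u'') \<le> k - 1" .
      have "length (schensted_P u'') = k"
        using shp[OF u''(2)] unfolding tableau_shape_def k_def by (metis length_map length_rev length_sort)
      then show False using rows_le_card[of u''] c1 j by simp
    qed
  qed
  have qu: "qr_shape u = \<alpha>"
  proof -
    have "sorted_list_of_set (set u) = [b..<b+k]" unfolding setu by simp
    then have "qr_shape u = map (\<lambda>j. count_list u (b+j)) [0..<k]"
      unfolding qr_shape_G using G_upt[OF cuts] by simp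
    also have "\<dots> = \<alpha>" by (rule nth_equalityI) (auto simp: k_def ucnt)
    finally show ?thesis .
  qed
  define D where "D = component hypo_edges u"
  have "D \<in> hypo_components" unfolding D_def hypo_components_def using u(1) by blast
  moreover have "D \<subseteq> C"
  proof
    fix w assume "w \<in> D"
    then have "(u, w) \<in> (hypo_edges \<union> hypo_edges\<inverse>)\<^sup>*" unfolding D_def component_def by simp
    moreover have "hypo_edges \<union> hypo_edges\<inverse> \<subseteq> RR" unfolding RR_def using hypo_sub by auto
    ultimately have "(u, w) \<in> RR\<^sup>*" using rtrancl_mono by blast
    then have "(w0, w) \<in> RR\<^sup>*" using u(2) by simp
    then show "w \<in> C" using Cmem by simp
  qed
  moreover have "\<forall>w\<in>D. qr_shape w = \<alpha>"
  proof
    fix w assume "w \<in> D"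
    then have "(u, w) \<in> (hypo_edges \<union> hypo_edges\<inverse>)\<^sup>*" unfolding D_def component_def by simp
    then show "qr_shape w = \<alpha>" using hypo_inv qu by simp
  qed
  ultimately show ?thesis by blast
qed


end
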